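(* Let $r>0$ and let $G$ be a hyperbolic uniform disk graph with radius $r$ with at least one vertex. Then $G$ has a vertex $v$ such that the set of neighbors of $v$ can be covered by three cliques of $G$, and there exist four points of $\mathbb{H}^2$ such that every disk of a neighbor of $v$ contains at least one of these four points.
   Context: $\mathbb{H}^2$ denotes the hyperbolic plane of Gaussian curvature $-1$. A hyperbolic uniform disk graph with radius $r$ is the intersection graph of a finite family of closed hyperbolic disks of radius $r$ in $\mathbb{H}^2$: vertices are the disks (identified with their centers), and two vertices are adjacent iff the disks intersect, i.e., iff their centers have hyperbolic distance at most $2r$. *)

theory Defs
  imports "HOL-Analysis.Analysis"
begin

text \<open>The hyperbolic plane of curvature -1, in the Poincare disk model:
  points are complex numbers of modulus < 1.\<close>
definition hyp_plane :: "complex set" where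
  "hyp_plane = {z. norm z < 1}"

definition hdist :: "complex \<Rightarrow> complex \<Rightarrow> real" where
  "hdist z w = arcosh (1 + 2 * (norm (z - w))^2 / ((1 - (norm z)^2) * (1 - (norm w)^2)))"

definition hdisk :: "complex \<Rightarrow> real \<Rightarrow> complex set" where
  "hdisk c r = {z \<in> hyp_plane. hdist c z \<le> r}"

text \<open>Hyperbolic uniform disk graph: finite vertex set V (the disks), centre map c.
  Two distinct vertices are adjacent iff their closed radius-r disks intersect,
  i.e. iff the centres are at hyperbolic distance at most 2r.\<close>
definition hudg_adj :: "('a \<Rightarrow> complex) \<Rightarrow> real \<Rightarrow> 'a \<Rightarrow> 'a \<Rightarrow> bool" where
  "hudg_adj c r u v \<longleftrightarrow> u \<noteq> v \<and> hdist (c u) (c v) \<le> 2 * r"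

definition hudg_neighbors :: "'a set \<Rightarrow> ('a \<Rightarrow> complex) \<Rightarrow> real \<Rightarrow> 'a \<Rightarrow> 'a set" where
  "hudg_neighbors V c r v = {u \<in> V. hudg_adj c r u v}"

definition hudg_clique :: "'a set \<Rightarrow> ('a \<Rightarrow> complex) \<Rightarrow> real \<Rightarrow> 'a set \<Rightarrow> bool" where
  "hudg_clique V c r K \<longleftrightarrow> K \<subseteq> V \<and> (\<forall>u\<in>K. \<forall>w\<in>K. u \<noteq> w \<longrightarrow> hudg_adj c r u w)"

end

theory Submission
  imports Defs
begin

definition pw :: "real \<Rightarrow> real \<Rightarrow> real \<Rightarrow> real \<Rightarrow> real \<Rightarrow> real" where
  "pw t a b pa pb = (a-pa)^2 + (b-pb)^2 - 2*t*(1+b)*(1+pb)"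
definition gg :: "real \<Rightarrow> real \<Rightarrow> real \<Rightarrow> real" where
  "gg s a b = a^2 + b^2 - 2* s*(1+b)"
definition ell :: "real \<Rightarrow> real \<Rightarrow> real \<Rightarrow> real \<Rightarrow> real \<Rightarrow> real \<Rightarrow> real" where
  "ell s t a b pa pb = -2*(a*pa + b*pb) + 2*b*(s - t*(1+pb))"

lemma pw_conv_eq:
  "pw t (th*x1 + (1-th)*x2) (th*y1 + (1-th)*y2) pa pb =
   th * pw t x1 y1 pa pb + (1-th) * pw t x2 y2 pa pb - th*(1-th)*((x1-x2)^2+(y1-y2)^2)"
  unfolding pw_def by algebra

lemma pw_conv:
  assumes "0 \<le> th" "th \<le> 1" "pw t x1 y1 pa pb \<le> 0" "pw t x2 y2 pa pb \<le> 0"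
  shows "pw t (th*x1 + (1-th)*x2) (th*y1 + (1-th)*y2) pa pb \<le> 0"
proof -
  have "th*(1-th)*((x1-x2)^2+(y1-y2)^2) \<ge> 0" using assms by simp
  moreover have "th * pw t x1 y1 pa pb \<le> 0" using assms by (simp add: mult_nonneg_nonpos)
  moreover have "(1-th) * pw t x2 y2 pa pb \<le> 0" using assms by (simp add: mult_nonneg_nonpos)
  ultimately show ?thesis unfolding pw_conv_eq by linarith
qed

lemma pw_minus_gg:
  "pw t a b pa pb - gg s a b = (pw t 0 0 pa pb - gg s 0 0) + ell s t a b pa pb"
  unfolding pw_def gg_def ell_def by (simp add: power2_eq_square algebra_simps)

lemma pierce_cone:
  fixes s t e1a e1b e2a e2b s0 p0a p0b pa pb lam mu :: real
  assumes g1: "gg s e1a e1b = 0" and g2: "gg s e2a e2b = 0"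
    and s0: "0 < s0" "s0 < 1"
    and c0: "pw t 0 0 p0a p0b \<le> 0"
    and c1: "pw t (s0*e1a) (s0*e1b) p0a p0b \<le> 0"
    and c2: "pw t (s0*e2a) (s0*e2b) p0a p0b \<le> 0"
    and c3: "pw t (s0*e1a) (s0*e1b) pa pb \<le> 0"
    and c4: "pw t (s0*e2a) (s0*e2b) pa pb \<le> 0"
    and c5: "pw t e1a e1b pa pb \<le> 0"
    and c6: "pw t e2a e2b pa pb \<le> 0"
    and c7: "ell s t e1a e1b pa pb \<le> 0"
    and c8: "ell s t e2a e2b pa pb \<le> 0"
    and lm: "lam \<ge> 0" "mu \<ge> 0"
    and gu: "gg s (lam*e1a+mu*e2a) (lam*e1b+mu*e2b) \<le> 0"
  shows "pw t (lam*e1a+mu*e2a) (lam*e1b+mu*e2b) p0a p0b \<le> 0 \<or>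
         pw t (lam*e1a+mu*e2a) (lam*e1b+mu*e2b) pa pb \<le> 0"
proof (cases "lam + mu = 0")
  case True
  then have "lam = 0" "mu = 0" using lm by auto
  then show ?thesis using c0 by simp
next
  case False
  define sg where "sg = lam + mu"
  have sgpos: "sg > 0" using False lm sg_def by auto
  define th where "th = lam / sg"
  have th01: "0 \<le> th" "th \<le> 1" using lm sgpos by (auto simp: th_def sg_def field_simps)
  have mu_eq: "mu = (1-th)* sg" using sgpos by (simp add: th_def sg_def field_simps)
  have lam_eq: "lam = th* sg" using sgpos by (simp add: th_def)
  define wa where "wa = th*e1a + (1-th)*e2a"
  define wb where "wb = th*e1b + (1-th)*e2b"
  have ua: "lam*e1a+mu*e2a = sg*wa" unfolding wa_def lam_eq mu_eq by algebra
  have ub: "lam*e1b+mu*e2b = sg*wb" unfolding wb_def lam_eq mu_eq by algebra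
  have w0: "pw t (s0*wa) (s0*wb) p0a p0b \<le> 0"
  proof -
    have "s0*wa = th*(s0*e1a) + (1-th)*(s0*e2a)" "s0*wb = th*(s0*e1b) + (1-th)*(s0*e2b)"
      unfolding wa_def wb_def by algebra+
    then show ?thesis using pw_conv[OF th01 c1 c2] by simp
  qed
  have w1: "pw t (s0*wa) (s0*wb) pa pb \<le> 0"
  proof -
    have "s0*wa = th*(s0*e1a) + (1-th)*(s0*e2a)" "s0*wb = th*(s0*e1b) + (1-th)*(s0*e2b)"
      unfolding wa_def wb_def by algebra+
    then show ?thesis using pw_conv[OF th01 c3 c4] by simp
  qed
  have w2: "pw t wa wb pa pb \<le> 0"
    unfolding wa_def wb_def using pw_conv[OF th01 c5 c6] by simp
  consider "sg \<le> s0" | "s0 \<le> sg" "sg \<le> 1" | "1 \<le> sg" by linarith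
  then show ?thesis
  proof cases
    case 1
    define ph where "ph = sg / s0"
    have ph01: "0 \<le> ph" "ph \<le> 1" using 1 sgpos s0 by (auto simp: ph_def field_simps)
    have e: "ph* s0 = sg" using s0 by (simp add: ph_def)
    have eqs: "sg*wa = ph*(s0*wa) + (1-ph)*0" "sg*wb = ph*(s0*wb) + (1-ph)*0"
      using e by (simp_all add: mult.assoc[symmetric])
    have "pw t (sg*wa) (sg*wb) p0a p0b \<le> 0"
      by (simp only: eqs) (rule pw_conv[OF ph01 w0 c0])
    then show ?thesis unfolding ua ub by simp
  next
    case 2
    define ph where "ph = (1 - sg) / (1 - s0)"
    have ph01: "0 \<le> ph" "ph \<le> 1" using 2 sgpos s0 by (auto simp: ph_def field_simps)
    have ne: "1 - s0 \<noteq> 0" using s0 by simp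
    have h0: "ph*(1-s0) = 1-sg" unfolding ph_def using ne by simp
    have h: "ph - ph* s0 = 1 - sg" using h0 by (simp add: right_diff_distrib)
    have e: "ph* s0 + (1-ph) = sg" using h by linarith
    have "sg*wa = ph*(s0*wa) + (1-ph)*wa" "sg*wb = ph*(s0*wb) + (1-ph)*wb"
      using e by (metis add.commute distrib_right mult.assoc mult.left_neutral)+
    then have "pw t (sg*wa) (sg*wb) pa pb \<le> 0"
      using pw_conv[OF ph01 w1 w2] by simp
    then show ?thesis unfolding ua ub by simp
  next
    case 3
    have lin: "ell s t (sg*wa) (sg*wb) pa pb = sg * ell s t wa wb pa pb"
      unfolding ell_def by algebra
    have lw: "ell s t wa wb pa pb = th * ell s t e1a e1b pa pb + (1-th) * ell s t e2a e2b pa pb"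
      unfolding ell_def wa_def wb_def by algebra
    have lwn: "ell s t wa wb pa pb \<le> 0"
      using lw th01 c7 c8 by (simp add: add_nonpos_nonpos mult_nonneg_nonpos)
    have A: "pw t wa wb pa pb - gg s wa wb = (pw t 0 0 pa pb - gg s 0 0) + ell s t wa wb pa pb"
      by (rule pw_minus_gg)
    have B: "pw t (sg*wa) (sg*wb) pa pb - gg s (sg*wa) (sg*wb) = (pw t 0 0 pa pb - gg s 0 0) + ell s t (sg*wa) (sg*wb) pa pb"
      by (rule pw_minus_gg)
    have C: "pw t wa wb pa pb - gg s wa wb = th*(pw t e1a e1b pa pb - gg s e1a e1b) + (1-th)*(pw t e2a e2b pa pb - gg s e2a e2b)"
      unfolding pw_def gg_def wa_def wb_def by algebra
    have "pw t wa wb pa pb - gg s wa wb \<le> 0"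
      using C g1 g2 th01 c5 c6 by (simp add: add_nonpos_nonpos mult_nonneg_nonpos)
    moreover have "(sg - 1) * ell s t wa wb pa pb \<le> 0"
      using 3 lwn by (simp add: mult_nonneg_nonpos)
    moreover have "gg s (sg*wa) (sg*wb) \<le> 0" using gu ua ub by simp
    ultimately have "pw t (sg*wa) (sg*wb) pa pb \<le> 0"
      using A B lin by (simp add: algebra_simps)
    then show ?thesis unfolding ua ub by simp
  qed
qed

lemma gg_cone_bound:
  fixes s l m ea eb fa fb :: real
  assumes s: "s > 0" and lm: "l \<ge> 0" "m \<ge> 0"
    and e: "ea^2 + eb^2 \<le> 2* s*(1+eb)" and f: "fa^2 + fb^2 \<le> 2* s*(1+fb)"
  shows "gg s (l*ea+m*fa) (l*eb+m*fb) \<le> 2* s*((l+m)-1)*((l+m)+1+(l*eb+m*fb))"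
proof -
  have id: "(l+m)*(l*(ea^2+eb^2) + m*(fa^2+fb^2)) - ((l*ea+m*fa)^2 + (l*eb+m*fb)^2)
            = l*m*((ea-fa)^2+(eb-fb)^2)"
    by algebra
  have "l*m*((ea-fa)^2+(eb-fb)^2) \<ge> 0" using lm by simp
  then have j: "(l*ea+m*fa)^2 + (l*eb+m*fb)^2 \<le> (l+m)*(l*(ea^2+eb^2) + m*(fa^2+fb^2))"
    using id by linarith
  have "l*(ea^2+eb^2) \<le> l*(2* s*(1+eb))" using lm e by (simp add: mult_left_mono)
  moreover have "m*(fa^2+fb^2) \<le> m*(2* s*(1+fb))" using lm f by (simp add: mult_left_mono)
  ultimately have "(l+m)*(l*(ea^2+eb^2) + m*(fa^2+fb^2)) \<le> (l+m)*(l*(2* s*(1+eb)) + m*(2* s*(1+fb)))"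
    using lm by (intro mult_left_mono) auto
  with j have "(l*ea+m*fa)^2 + (l*eb+m*fb)^2 \<le> (l+m)*(l*(2* s*(1+eb)) + m*(2* s*(1+fb)))"
    by linarith
  moreover have "(l+m)*(l*(2* s*(1+eb)) + m*(2* s*(1+fb))) - 2* s*(1+(l*eb+m*fb))
     = 2* s*((l+m)-1)*((l+m)+1+(l*eb+m*fb))" by algebra
  ultimately show ?thesis unfolding gg_def by linarith
qed

lemma clique_cone:
  fixes s e1a e1b e2a e2b l1 m1 l2 m2 :: real
  assumes s: "s > 0" and eb: "e1b \<ge> 0" "e2b \<ge> 0"
    and e1: "e1a^2 + e1b^2 \<le> 2* s*(1+e1b)" and e2: "e2a^2 + e2b^2 \<le> 2* s*(1+e2b)"
    and B11: "e1a*e1a + (s+1)*e1b*e1b \<ge> s"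
    and B12: "e1a*e2a + (s+1)*e1b*e2b \<ge> s"
    and B22: "e2a*e2a + (s+1)*e2b*e2b \<ge> s"
    and lm: "l1 \<ge> 0" "m1 \<ge> 0" "l2 \<ge> 0" "m2 \<ge> 0"
    and g1: "gg s (l1*e1a+m1*e2a) (l1*e1b+m1*e2b) \<le> 0"
    and g2: "gg s (l2*e1a+m2*e2a) (l2*e1b+m2*e2b) \<le> 0"
  shows "((l1*e1a+m1*e2a) - (l2*e1a+m2*e2a))^2 + ((l1*e1b+m1*e2b) - (l2*e1b+m2*e2b))^2
         \<le> 2* s*(1+(l1*e1b+m1*e2b))*(1+(l2*e1b+m2*e2b))"
proof -
  define a1 where "a1 = l1*e1a+m1*e2a"
  define b1 where "b1 = l1*e1b+m1*e2b"
  define a2 where "a2 = l2*e1a+m2*e2a"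
  define b2 where "b2 = l2*e1b+m2*e2b"
  define S1 where "S1 = l1+m1"
  define S2 where "S2 = l2+m2"
  have b1nn: "b1 \<ge> 0" "b2 \<ge> 0" unfolding b1_def b2_def using lm eb by auto
  have S: "S1 \<ge> 0" "S2 \<ge> 0" unfolding S1_def S2_def using lm by auto
  have key: "(a1-a2)^2 + (b1-b2)^2 - 2* s*(1+b1)*(1+b2)
       = gg s a1 b1 + gg s a2 b2 + 2* s - 2*(a1*a2 + (s+1)*b1*b2)"
    unfolding gg_def by algebra
  have Bexp: "a1*a2 + (s+1)*b1*b2 = l1*l2*(e1a*e1a + (s+1)*e1b*e1b)
      + (l1*m2 + m1*l2)*(e1a*e2a + (s+1)*e1b*e2b) + m1*m2*(e2a*e2a + (s+1)*e2b*e2b)"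
    unfolding a1_def a2_def b1_def b2_def by algebra
  have "l1*l2*(e1a*e1a + (s+1)*e1b*e1b) \<ge> l1*l2* s" using B11 lm by (simp add: mult_left_mono)
  moreover have "(l1*m2 + m1*l2)*(e1a*e2a + (s+1)*e1b*e2b) \<ge> (l1*m2 + m1*l2)* s"
    using B12 lm by (simp add: mult_left_mono)
  moreover have "m1*m2*(e2a*e2a + (s+1)*e2b*e2b) \<ge> m1*m2* s" using B22 lm by (simp add: mult_left_mono)
  moreover have "l1*l2* s + (l1*m2 + m1*l2)* s + m1*m2* s = s*S1*S2"
    unfolding S1_def S2_def by algebra
  ultimately have Bge: "a1*a2 + (s+1)*b1*b2 \<ge> s*S1*S2" using Bexp by linarith
  have G1: "gg s a1 b1 \<le> 2* s*(S1-1)*(S1+1+b1)"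
    unfolding a1_def b1_def S1_def by (rule gg_cone_bound[OF s lm(1,2) e1 e2])
  have G2: "gg s a2 b2 \<le> 2* s*(S2-1)*(S2+1+b2)"
    unfolding a2_def b2_def S2_def by (rule gg_cone_bound[OF s lm(3,4) e1 e2])
  have g1': "gg s a1 b1 \<le> 0" using g1 a1_def b1_def by simp
  have g2': "gg s a2 b2 \<le> 0" using g2 a2_def b2_def by simp
  have G1': "S1 \<le> 1 \<Longrightarrow> gg s a1 b1 \<le> 2* s*(S1*S1-1)"
  proof -
    assume "S1 \<le> 1"
    then have "(S1-1)*b1 \<le> 0" using b1nn by (simp add: mult_nonpos_nonneg)
    then have "2* s*((S1-1)*b1) \<le> 0" using s by (simp add: mult_nonneg_nonpos)
    moreover have "2* s*(S1-1)*(S1+1+b1) = 2* s*(S1*S1-1) + 2* s*((S1-1)*b1)" by algebra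
    ultimately show ?thesis using G1 by linarith
  qed
  have G2': "S2 \<le> 1 \<Longrightarrow> gg s a2 b2 \<le> 2* s*(S2*S2-1)"
  proof -
    assume "S2 \<le> 1"
    then have "(S2-1)*b2 \<le> 0" using b1nn by (simp add: mult_nonpos_nonneg)
    then have "2* s*((S2-1)*b2) \<le> 0" using s by (simp add: mult_nonneg_nonpos)
    moreover have "2* s*(S2-1)*(S2+1+b2) = 2* s*(S2*S2-1) + 2* s*((S2-1)*b2)" by algebra
    ultimately show ?thesis using G2 by linarith
  qed
  have sS: "2*(s*S1*S2) = 2* s*(S1*S2)" by simp
  have main: "gg s a1 b1 + gg s a2 b2 + 2* s - 2*(s*S1*S2) \<le> 0"
  proof -
    consider "S1 \<le> 1" "S2 \<le> 1" | "S1 \<ge> 1" "S2 \<le> 1" | "S1 \<le> 1" "S2 \<ge> 1" | "S1 \<ge> 1" "S2 \<ge> 1"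
      by linarith
    then show ?thesis
    proof cases
      case 1
      have q: "S1*S1 + S2*S2 - 1 - S1*S2 \<le> 0"
      proof (cases "S1 \<le> S2")
        case True
        have "S1*(S1 - S2) \<le> 0" using True S by (simp add: mult_nonneg_nonpos)
        moreover have "S2*S2 \<le> 1" using 1 S by (simp add: mult_le_one)
        ultimately show ?thesis by (simp add: algebra_simps)
      next
        case False
        have "S2*(S2 - S1) \<le> 0" using False S by (simp add: mult_nonneg_nonpos)
        moreover have "S1*S1 \<le> 1" using 1 S by (simp add: mult_le_one)
        ultimately show ?thesis by (simp add: algebra_simps)
      qed
      have "2* s*(S1*S1-1) + 2* s*(S2*S2-1) + 2* s - 2*(s*S1*S2) = 2* s*(S1*S1 + S2*S2 - 1 - S1*S2)"
        by algebra
      moreover have "2* s*(S1*S1 + S2*S2 - 1 - S1*S2) \<le> 0" using q s by (simp add: mult_nonneg_nonpos)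
      ultimately show ?thesis using G1'[OF 1(1)] G2'[OF 1(2)] by linarith
    next
      case 2
      have "S2*(S2 - S1) \<le> 0" using 2 S by (simp add: mult_nonneg_nonpos)
      then have "2* s*(S2*(S2-S1)) \<le> 0" using s by (simp add: mult_nonneg_nonpos)
      moreover have "2* s*(S2*S2-1) + 2* s - 2*(s*S1*S2) = 2* s*(S2*(S2-S1))" by algebra
      ultimately show ?thesis using g1' G2'[OF 2(2)] by linarith
    next
      case 3
      have "S1*(S1 - S2) \<le> 0" using 3 S by (simp add: mult_nonneg_nonpos)
      then have "2* s*(S1*(S1-S2)) \<le> 0" using s by (simp add: mult_nonneg_nonpos)
      moreover have "2* s*(S1*S1-1) + 2* s - 2*(s*S1*S2) = 2* s*(S1*(S1-S2))" by algebra
      ultimately show ?thesis using g2' G1'[OF 3(1)] by linarith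
    next
      case 4
      have "S1*S2 \<ge> 1" using 4 by (metis mult_mono' mult_1 zero_le_one order_trans)
      then have "s*(S1*S2) \<ge> s*1" using s by (intro mult_left_mono) auto
      then show ?thesis using g1' g2' by (simp add: mult.assoc)
    qed
  qed
  have "(a1-a2)^2 + (b1-b2)^2 - 2* s*(1+b1)*(1+b2) \<le> 0"
    unfolding key using main Bge by (smt (verit))
  then show ?thesis unfolding a1_def b1_def a2_def b2_def by linarith
qed

definition cay :: "complex \<Rightarrow> complex" where "cay z = \<i> * (1 + z) / (1 - z)"
definition icay :: "complex \<Rightarrow> complex" where "icay w = (w - \<i>) / (w + \<i>)"

lemma norm_lt1_ne1: "norm (z::complex) < 1 \<Longrightarrow> 1 - z \<noteq> 0" by auto

lemma cay_im:
  assumes "norm z < 1"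
  shows "Im (cay z) = (1 - (norm z)^2) / (norm (1 - z))^2"
proof -
  have a: "(norm z)^2 = (Re z)^2 + (Im z)^2" by (simp add: cmod_power2)
  have b: "(norm (1-z))^2 = (1 - Re z)^2 + (Im z)^2" by (simp add: cmod_power2)
  show ?thesis unfolding cay_def a b by (simp add: Im_divide power2_eq_square algebra_simps)
qed

lemma cay_im_pos: "norm z < 1 \<Longrightarrow> Im (cay z) > 0"
proof -
  assume a: "norm z < 1"
  have "1 - (norm z)^2 > 0" using a by (simp add: power_less_one_iff abs_less_iff)
  moreover have "(norm (1 - z))^2 > 0" using a by auto
  ultimately show ?thesis using cay_im[OF a] by simp
qed

lemma cay_diff:
  assumes "norm z1 < 1" "norm z2 < 1"
  shows "cay z1 - cay z2 = 2 * \<i> * (z1 - z2) / ((1 - z1) * (1 - z2))"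
  using norm_lt1_ne1[OF assms(1)] norm_lt1_ne1[OF assms(2)]
  unfolding cay_def by (simp add: divide_simps) (simp add: algebra_simps)

lemma cay_norm_diff:
  assumes "norm z1 < 1" "norm z2 < 1"
  shows "(norm (cay z1 - cay z2))^2 = 4 * (norm (z1 - z2))^2 / ((norm (1 - z1))^2 * (norm (1 - z2))^2)"
  unfolding cay_diff[OF assms] by (simp add: norm_mult norm_divide power_divide power_mult_distrib)

lemma ratio_aux:
  fixes N a b p q :: real
  assumes "a > 0" "b > 0" "p > 0" "q > 0"
  shows "2 * N / (a * b) = (4 * N / (p * q)) / (2 * (a / p) * (b / q))"
  using assms by (simp add: field_simps)

lemma cay_ratio:
  assumes "norm z1 < 1" "norm z2 < 1"
  shows "2 * (norm (z1 - z2))^2 / ((1 - (norm z1)^2) * (1 - (norm z2)^2))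
       = (norm (cay z1 - cay z2))^2 / (2 * Im (cay z1) * Im (cay z2))"
proof -
  have n1: "(norm (1 - z1))^2 > 0" "(norm (1 - z2))^2 > 0" using assms by auto
  have d1: "1 - (norm z1)^2 > 0" "1 - (norm z2)^2 > 0" using assms
    by (simp_all add: power_less_one_iff abs_less_iff)
  show ?thesis
    unfolding cay_norm_diff[OF assms] cay_im[OF assms(1)] cay_im[OF assms(2)]
    by (rule ratio_aux[OF d1 n1])
qed

lemma icay_norm:
  assumes "Im w > 0"
  shows "norm (icay w) < 1"
proof -
  have "w + \<i> \<noteq> 0" using assms by (auto simp: complex_eq_iff)
  have e1: "(norm (w - \<i>))^2 = (Re w)^2 + (Im w - 1)^2" by (simp add: cmod_power2)
  have e2: "(norm (w + \<i>))^2 = (Re w)^2 + (Im w + 1)^2" by (simp add: cmod_power2)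
  have "(norm (w - \<i>))^2 < (norm (w + \<i>))^2"
    unfolding e1 e2 using assms by (simp add: power2_eq_square algebra_simps)
  then have "norm (w - \<i>) < norm (w + \<i>)"
    by (meson norm_ge_zero power_less_imp_less_base)
  then show ?thesis unfolding icay_def using \<open>w + \<i> \<noteq> 0\<close> by (simp add: norm_divide divide_less_eq)
qed

lemma cay_icay:
  assumes "Im w > 0"
  shows "cay (icay w) = w"
proof -
  have ne: "w + \<i> \<noteq> 0" using assms by (auto simp: complex_eq_iff)
  have h1: "1 - icay w = 2 * \<i> / (w + \<i>)" unfolding icay_def using ne by (simp add: field_simps)
  have h2: "1 + icay w = 2 * w / (w + \<i>)" unfolding icay_def using ne by (simp add: field_simps)
  have e2: "\<i> * (w * 2) - 2 = 2*\<i>*(w+\<i>)" by (simp add: algebra_simps)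
  have ne2: "\<i> * (w * 2) - 2 \<noteq> 0" unfolding e2 using ne by simp
  show ?thesis unfolding cay_def h1 h2 using ne ne2 by (simp add: field_simps)
qed

lemma hdist_cay:
  assumes "norm z1 < 1" "norm z2 < 1"
  shows "hdist z1 z2 = arcosh (1 + (norm (cay z1 - cay z2))^2 / (2 * Im (cay z1) * Im (cay z2)))"
  unfolding hdist_def cay_ratio[OF assms, symmetric] by (simp add: mult.assoc)

lemma arcosh_le_iff:
  fixes x R :: real
  assumes "x \<ge> 1" "R \<ge> 0"
  shows "arcosh x \<le> R \<longleftrightarrow> x \<le> cosh R"
proof -
  have "arcosh x \<le> arcosh (cosh R) \<longleftrightarrow> x \<le> cosh R"
    using arcosh_less_iff_real[of "cosh R" x] assms cosh_real_ge_1[of R] by (auto simp: not_less[symmetric])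
  then show ?thesis using arcosh_cosh_real[OF assms(2)] by simp
qed

definition ca :: "real \<Rightarrow> real \<Rightarrow> complex \<Rightarrow> real" where "ca X Y z = (Re (cay z) - X) / Y"
definition cb :: "real \<Rightarrow> real \<Rightarrow> complex \<Rightarrow> real" where "cb X Y z = Im (cay z) / Y - 1"

lemma hdist_le_iff:
  assumes "norm z1 < 1" "norm z2 < 1" "Y > 0" "R \<ge> 0"
  shows "hdist z1 z2 \<le> R \<longleftrightarrow>
     (ca X Y z1 - ca X Y z2)^2 + (cb X Y z1 - cb X Y z2)^2 \<le> 2*(cosh R - 1)*(1 + cb X Y z1)*(1 + cb X Y z2)"
proof -
  define w1 where "w1 = cay z1"
  define w2 where "w2 = cay z2"
  have p1: "Im w1 > 0" "Im w2 > 0" using cay_im_pos assms unfolding w1_def w2_def by auto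
  define D where "D = (norm (w1 - w2))^2"
  have D: "D = (Re w1 - Re w2)^2 + (Im w1 - Im w2)^2" unfolding D_def by (simp add: cmod_power2)
  have Dnn: "D \<ge> 0" unfolding D_def by simp
  have q1: "1 + D / (2 * Im w1 * Im w2) \<ge> 1" using p1 Dnn by simp
  have "hdist z1 z2 \<le> R \<longleftrightarrow> 1 + D / (2 * Im w1 * Im w2) \<le> cosh R"
    unfolding hdist_cay[OF assms(1,2)] D_def w1_def w2_def
    using arcosh_le_iff[OF _ assms(4)] q1 unfolding D_def w1_def w2_def by blast
  also have "\<dots> \<longleftrightarrow> D \<le> 2*(cosh R - 1)*(Im w1 * Im w2)"
    using p1 by (simp add: field_simps)
  also have "\<dots> \<longleftrightarrow> D / Y^2 \<le> 2*(cosh R - 1)*(Im w1 * Im w2) / Y^2"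
    using assms(3) by (simp add: divide_le_cancel)
  also have "D / Y^2 = (ca X Y z1 - ca X Y z2)^2 + (cb X Y z1 - cb X Y z2)^2"
    unfolding D ca_def cb_def w1_def w2_def using assms(3) by (simp add: field_simps power2_eq_square)
  also have "2*(cosh R - 1)*(Im w1 * Im w2) / Y^2 = 2*(cosh R - 1)*(1 + cb X Y z1)*(1 + cb X Y z2)"
    unfolding cb_def w1_def w2_def using assms(3) by (simp add: field_simps power2_eq_square)
  finally show ?thesis .
qed

lemma icay_coords:
  fixes X Y pa pb :: real
  assumes "Y > 0" "1 + pb > 0"
  shows "norm (icay (Complex (X + Y*pa) (Y*(1+pb)))) < 1"
    "ca X Y (icay (Complex (X + Y*pa) (Y*(1+pb)))) = pa"
    "cb X Y (icay (Complex (X + Y*pa) (Y*(1+pb)))) = pb"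
proof -
  have im: "Im (Complex (X + Y*pa) (Y*(1+pb))) > 0" using assms by simp
  then show "norm (icay (Complex (X + Y*pa) (Y*(1+pb)))) < 1" by (rule icay_norm)
  have e: "cay (icay (Complex (X + Y*pa) (Y*(1+pb)))) = Complex (X + Y*pa) (Y*(1+pb))"
    by (rule cay_icay[OF im])
  show "ca X Y (icay (Complex (X + Y*pa) (Y*(1+pb)))) = pa" unfolding ca_def e using assms by simp
  show "cb X Y (icay (Complex (X + Y*pa) (Y*(1+pb)))) = pb" unfolding cb_def e using assms by simp
qed

definition "pc tn td Ua Ub du Pa Pb dp = (td::real)*((Ua*dp - Pa*du)^2 + (Ub*dp - Pb*du)^2) - 2*tn*(du+Ub)*(dp+Pb)*du*dp"
definition "elc (L::real) Ua Ub (du::real) Pa Pb dp = -2*(Ua*Pa + Ub*Pb)*(1-L^2)^2 + 2*Ub*(8*L^2*dp - 2*L^2*(1-L^2)*(dp+Pb))"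
definition "gcl (L::real) Ua Ub du = (1-L^2)^2*(Ua^2+Ub^2) - 16*L^2*du*(du+Ub)"
definition "tnf (L::real) w = -(2-w)*(17/10)*(1-L)"
definition "tdf (L::real) = 17/10 + 3/10*L"
definition "den2 L w = (1-L)^4*(tdf L)^2 + (tnf L w)^2*(1+L)^4"
definition "E2a L w = -(tnf L w)*(tdf L)*((1+L)^4 - (1-L)^4)"
definition "E2b L w = (1+L)^2*(1-L)^2*((tdf L)^2 + (tnf L w)^2) - den2 L w"
definition "PRa (L::real) = 2*L*((3/2)*(1-L) + (67/50)*L)"
definition "PRb (L::real) (w::real) = 2*L*((w/2)*(1-L) + (29/25)*L)"
definition "PMb (L::real) (w::real) = 2*L*(w*(1-L) + (16/5)*L)"
definition "P0b (L::real) = 2*L*((47/50)*L)"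
definition "sR (L::real) = (1/2)*(1-L) + (17/50)*L"
definition "sM (L::real) = (1/2)*(1-L) + (3/10)*L"

lemma gcl_E2: "gcl L (E2a L w) (E2b L w) (den2 L w) = 0"
  unfolding gcl_def den2_def E2a_def E2b_def tnf_def tdf_def by algebra

lemma chk_p0_0:
  fixes L w :: real
  assumes L: "0 \<le> L" "L \<le> 1" and w2: "w^2 = 3" and wl: "(4330127/2500000) \<le> w" and wu: "w \<le> (17320509/10000000)"
  shows "pc (2*L^2) (1-L^2) 0 0 1 0 (P0b L) (1-L^2) \<le> 0"
proof -
  have L1: "0 \<le> 1 - L" using L by simp
  have t0: "0 \<le> 4 * ((1-L)^3)" by (rule mult_nonneg_nonneg) (use wl wu in linarith, use L L1 in simp)
  have t1: "0 \<le> 16 * (L^1*(1-L)^2)" by (rule mult_nonneg_nonneg) (use wl wu in linarith, use L L1 in simp)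
  have t2: "0 \<le> (12491/625) * (L^2*(1-L)^1)" by (rule mult_nonneg_nonneg) (use wl wu in linarith, use L L1 in simp)
  have t3: "0 \<le> (4982/625) * (L^3)" by (rule mult_nonneg_nonneg) (use wl wu in linarith, use L L1 in simp)
  have s: "0 \<le> 4 * ((1-L)^3) + 16 * (L^1*(1-L)^2) + (12491/625) * (L^2*(1-L)^1) + (4982/625) * (L^3)" using t0 t1 t2 t3 by linarith
  have p: "0 \<le> L^2*(1-L)^1 * (4 * ((1-L)^3) + 16 * (L^1*(1-L)^2) + (12491/625) * (L^2*(1-L)^1) + (4982/625) * (L^3))" by (rule mult_nonneg_nonneg[OF _ s]) (use L L1 in simp)
  have eq: "pc (2*L^2) (1-L^2) 0 0 1 0 (P0b L) (1-L^2) = - (L^2*(1-L)^1 * (4 * ((1-L)^3) + 16 * (L^1*(1-L)^2) + (12491/625) * (L^2*(1-L)^1) + (4982/625) * (L^3))) + (w^2-3)*0" unfolding pc_def elc_def tnf_def tdf_def den2_def E2a_def E2b_def PRa_def PRb_def PMb_def P0b_def sR_def sM_def by ((simp only: mult_zero_left mult_zero_right mult_1_left mult_1_right add_0_left add_0_right diff_zero power_one_right power_zero_numeral)?, algebra)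
  show ?thesis using eq p w2 by simp
qed

lemma chk_R_in_E1:
  fixes L w :: real
  assumes L: "0 \<le> L" "L \<le> 1" and w2: "w^2 = 3" and wl: "(4330127/2500000) \<le> w" and wu: "w \<le> (17320509/10000000)"
  shows "pc (2*L^2) (1-L^2) (sR L * (4*L)) 0 (1-L^2) 0 (P0b L) (1-L^2) \<le> 0"
proof -
  have L1: "0 \<le> 1 - L" using L by simp
  have t0: "0 \<le> (64/25) * ((1-L)^4)" by (rule mult_nonneg_nonneg) (use wl wu in linarith, use L L1 in simp)
  have t1: "0 \<le> (2187/125) * (L^1*(1-L)^3)" by (rule mult_nonneg_nonneg) (use wl wu in linarith, use L L1 in simp)
  have t2: "0 \<le> (5442/125) * (L^2*(1-L)^2)" by (rule mult_nonneg_nonneg) (use wl wu in linarith, use L L1 in simp)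
  have t3: "0 \<le> (5764/125) * (L^3*(1-L)^1)" by (rule mult_nonneg_nonneg) (use wl wu in linarith, use L L1 in simp)
  have t4: "0 \<le> (2136/125) * (L^4)" by (rule mult_nonneg_nonneg) (use wl wu in linarith, use L L1 in simp)
  have s: "0 \<le> (64/25) * ((1-L)^4) + (2187/125) * (L^1*(1-L)^3) + (5442/125) * (L^2*(1-L)^2) + (5764/125) * (L^3*(1-L)^1) + (2136/125) * (L^4)" using t0 t1 t2 t3 t4 by linarith
  have p: "0 \<le> L^3*(1-L)^3 * ((64/25) * ((1-L)^4) + (2187/125) * (L^1*(1-L)^3) + (5442/125) * (L^2*(1-L)^2) + (5764/125) * (L^3*(1-L)^1) + (2136/125) * (L^4))" by (rule mult_nonneg_nonneg[OF _ s]) (use L L1 in simp)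
  have eq: "pc (2*L^2) (1-L^2) (sR L * (4*L)) 0 (1-L^2) 0 (P0b L) (1-L^2) = - (L^3*(1-L)^3 * ((64/25) * ((1-L)^4) + (2187/125) * (L^1*(1-L)^3) + (5442/125) * (L^2*(1-L)^2) + (5764/125) * (L^3*(1-L)^1) + (2136/125) * (L^4))) + (w^2-3)*0" unfolding pc_def elc_def tnf_def tdf_def den2_def E2a_def E2b_def PRa_def PRb_def PMb_def P0b_def sR_def sM_def by ((simp only: mult_zero_left mult_zero_right mult_1_left mult_1_right add_0_left add_0_right diff_zero power_one_right power_zero_numeral)?, algebra)
  show ?thesis using eq p w2 by simp
qed

lemma chk_R_sig_E1:
  fixes L w :: real
  assumes L: "0 \<le> L" "L \<le> 1" and w2: "w^2 = 3" and wl: "(4330127/2500000) \<le> w" and wu: "w \<le> (17320509/10000000)"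
  shows "pc (2*L^2) (1-L^2) (sR L * (4*L)) 0 (1-L^2) (PRa L) (PRb L w) (1-L^2) \<le> 0"
proof -
  have L1: "0 \<le> 1 - L" using L by simp
  have t0: "0 \<le> ((134/25) + (-16/25)*w) * ((1-L)^4)" by (rule mult_nonneg_nonneg) (use wl wu in linarith, use L L1 in simp)
  have t1: "0 \<le> ((21447/625) + (-96/25)*w) * (L^1*(1-L)^3)" by (rule mult_nonneg_nonneg) (use wl wu in linarith, use L L1 in simp)
  have t2: "0 \<le> ((48282/625) + (-192/25)*w) * (L^2*(1-L)^2)" by (rule mult_nonneg_nonneg) (use wl wu in linarith, use L L1 in simp)
  have t3: "0 \<le> ((42964/625) + (-128/25)*w) * (L^3*(1-L)^1)" by (rule mult_nonneg_nonneg) (use wl wu in linarith, use L L1 in simp)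
  have t4: "0 \<le> (10776/625) * (L^4)" by (rule mult_nonneg_nonneg) (use wl wu in linarith, use L L1 in simp)
  have s: "0 \<le> ((134/25) + (-16/25)*w) * ((1-L)^4) + ((21447/625) + (-96/25)*w) * (L^1*(1-L)^3) + ((48282/625) + (-192/25)*w) * (L^2*(1-L)^2) + ((42964/625) + (-128/25)*w) * (L^3*(1-L)^1) + (10776/625) * (L^4)" using t0 t1 t2 t3 t4 by linarith
  have p: "0 \<le> L^3*(1-L)^3 * (((134/25) + (-16/25)*w) * ((1-L)^4) + ((21447/625) + (-96/25)*w) * (L^1*(1-L)^3) + ((48282/625) + (-192/25)*w) * (L^2*(1-L)^2) + ((42964/625) + (-128/25)*w) * (L^3*(1-L)^1) + (10776/625) * (L^4))" by (rule mult_nonneg_nonneg[OF _ s]) (use L L1 in simp)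
  have eq: "pc (2*L^2) (1-L^2) (sR L * (4*L)) 0 (1-L^2) (PRa L) (PRb L w) (1-L^2) = - (L^3*(1-L)^3 * (((134/25) + (-16/25)*w) * ((1-L)^4) + ((21447/625) + (-96/25)*w) * (L^1*(1-L)^3) + ((48282/625) + (-192/25)*w) * (L^2*(1-L)^2) + ((42964/625) + (-128/25)*w) * (L^3*(1-L)^1) + (10776/625) * (L^4))) + (w^2-3)*(1*L^2 + (-2)*L^3 + (-2)*L^4 + 6*L^5 + (-6)*L^7 + 2*L^8 + 2*L^9 + (-1)*L^10)" unfolding pc_def elc_def tnf_def tdf_def den2_def E2a_def E2b_def PRa_def PRb_def PMb_def P0b_def sR_def sM_def by ((simp only: mult_zero_left mult_zero_right mult_1_left mult_1_right add_0_left add_0_right diff_zero power_one_right power_zero_numeral)?, algebra)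
  show ?thesis using eq p w2 by simp
qed

lemma chk_R_out_E1:
  fixes L w :: real
  assumes L: "0 \<le> L" "L \<le> 1" and w2: "w^2 = 3" and wl: "(4330127/2500000) \<le> w" and wu: "w \<le> (17320509/10000000)"
  shows "pc (2*L^2) (1-L^2) (4*L) 0 (1-L^2) (PRa L) (PRb L w) (1-L^2) \<le> 0"
proof -
  have L1: "0 \<le> 1 - L" using L by simp
  have t0: "0 \<le> ((134/25) + (-16/25)*w) * ((1-L)^4)" by (rule mult_nonneg_nonneg) (use wl wu in linarith, use L L1 in simp)
  have t1: "0 \<le> ((21447/625) + (-96/25)*w) * (L^1*(1-L)^3)" by (rule mult_nonneg_nonneg) (use wl wu in linarith, use L L1 in simp)
  have t2: "0 \<le> ((48282/625) + (-192/25)*w) * (L^2*(1-L)^2)" by (rule mult_nonneg_nonneg) (use wl wu in linarith, use L L1 in simp)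
  have t3: "0 \<le> ((42964/625) + (-128/25)*w) * (L^3*(1-L)^1)" by (rule mult_nonneg_nonneg) (use wl wu in linarith, use L L1 in simp)
  have t4: "0 \<le> (10776/625) * (L^4)" by (rule mult_nonneg_nonneg) (use wl wu in linarith, use L L1 in simp)
  have s: "0 \<le> ((134/25) + (-16/25)*w) * ((1-L)^4) + ((21447/625) + (-96/25)*w) * (L^1*(1-L)^3) + ((48282/625) + (-192/25)*w) * (L^2*(1-L)^2) + ((42964/625) + (-128/25)*w) * (L^3*(1-L)^1) + (10776/625) * (L^4)" using t0 t1 t2 t3 t4 by linarith
  have p: "0 \<le> L^3*(1-L)^3 * (((134/25) + (-16/25)*w) * ((1-L)^4) + ((21447/625) + (-96/25)*w) * (L^1*(1-L)^3) + ((48282/625) + (-192/25)*w) * (L^2*(1-L)^2) + ((42964/625) + (-128/25)*w) * (L^3*(1-L)^1) + (10776/625) * (L^4))" by (rule mult_nonneg_nonneg[OF _ s]) (use L L1 in simp)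
  have eq: "pc (2*L^2) (1-L^2) (4*L) 0 (1-L^2) (PRa L) (PRb L w) (1-L^2) = - (L^3*(1-L)^3 * (((134/25) + (-16/25)*w) * ((1-L)^4) + ((21447/625) + (-96/25)*w) * (L^1*(1-L)^3) + ((48282/625) + (-192/25)*w) * (L^2*(1-L)^2) + ((42964/625) + (-128/25)*w) * (L^3*(1-L)^1) + (10776/625) * (L^4))) + (w^2-3)*(1*L^2 + (-2)*L^3 + (-2)*L^4 + 6*L^5 + (-6)*L^7 + 2*L^8 + 2*L^9 + (-1)*L^10)" unfolding pc_def elc_def tnf_def tdf_def den2_def E2a_def E2b_def PRa_def PRb_def PMb_def P0b_def sR_def sM_def by ((simp only: mult_zero_left mult_zero_right mult_1_left mult_1_right add_0_left add_0_right diff_zero power_one_right power_zero_numeral)?, algebra)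
  show ?thesis using eq p w2 by simp
qed

lemma chk_R_ell_E1:
  fixes L w :: real
  assumes L: "0 \<le> L" "L \<le> 1" and w2: "w^2 = 3" and wl: "(4330127/2500000) \<le> w" and wu: "w \<le> (17320509/10000000)"
  shows "elc L (4*L) 0 (1-L^2) (PRa L) (PRb L w) (1-L^2) \<le> 0"
proof -
  have L1: "0 \<le> 1 - L" using L by simp
  have t0: "0 \<le> 24 * ((1-L)^3)" by (rule mult_nonneg_nonneg) (use wl wu in linarith, use L L1 in simp)
  have t1: "0 \<le> (2936/25) * (L^1*(1-L)^2)" by (rule mult_nonneg_nonneg) (use wl wu in linarith, use L L1 in simp)
  have t2: "0 \<le> (4544/25) * (L^2*(1-L)^1)" by (rule mult_nonneg_nonneg) (use wl wu in linarith, use L L1 in simp)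
  have t3: "0 \<le> (2144/25) * (L^3)" by (rule mult_nonneg_nonneg) (use wl wu in linarith, use L L1 in simp)
  have s: "0 \<le> 24 * ((1-L)^3) + (2936/25) * (L^1*(1-L)^2) + (4544/25) * (L^2*(1-L)^1) + (2144/25) * (L^3)" using t0 t1 t2 t3 by linarith
  have p: "0 \<le> L^2*(1-L)^2 * (24 * ((1-L)^3) + (2936/25) * (L^1*(1-L)^2) + (4544/25) * (L^2*(1-L)^1) + (2144/25) * (L^3))" by (rule mult_nonneg_nonneg[OF _ s]) (use L L1 in simp)
  have eq: "elc L (4*L) 0 (1-L^2) (PRa L) (PRb L w) (1-L^2) = - (L^2*(1-L)^2 * (24 * ((1-L)^3) + (2936/25) * (L^1*(1-L)^2) + (4544/25) * (L^2*(1-L)^1) + (2144/25) * (L^3))) + (w^2-3)*0" unfolding pc_def elc_def tnf_def tdf_def den2_def E2a_def E2b_def PRa_def PRb_def PMb_def P0b_def sR_def sM_def by ((simp only: mult_zero_left mult_zero_right mult_1_left mult_1_right add_0_left add_0_right diff_zero power_one_right power_zero_numeral)?, algebra)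
  show ?thesis using eq p w2 by simp
qed

lemma chk_R_in_E2:
  fixes L w :: real
  assumes L: "0 \<le> L" "L \<le> 1" and w2: "w^2 = 3" and wl: "(4330127/2500000) \<le> w" and wu: "w \<le> (17320509/10000000)"
  shows "pc (2*L^2) (1-L^2) (sR L * E2a L w) (sR L * E2b L w) (den2 L w) 0 (P0b L) (1-L^2) \<le> 0"
proof -
  have L1: "0 \<le> 1 - L" using L by simp
  have t0: "0 \<le> ((8686184/3125) + (-24889258/15625)*w) * ((1-L)^10)" by (rule mult_nonneg_nonneg) (use wl wu in linarith, use L L1 in simp)
  have t1: "0 \<le> ((17735306049/390625) + (-10192598234/390625)*w) * (L^1*(1-L)^9)" by (rule mult_nonneg_nonneg) (use wl wu in linarith, use L L1 in simp)
  have t2: "0 \<le> ((131402163374/390625) + (-75651609764/390625)*w) * (L^2*(1-L)^8)" by (rule mult_nonneg_nonneg) (use wl wu in linarith, use L L1 in simp)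
  have t3: "0 \<le> ((581844597396/390625) + (-335346318476/390625)*w) * (L^3*(1-L)^7)" by (rule mult_nonneg_nonneg) (use wl wu in linarith, use L L1 in simp)
  have t4: "0 \<le> ((1707394932304/390625) + (-984702079648/390625)*w) * (L^4*(1-L)^6)" by (rule mult_nonneg_nonneg) (use wl wu in linarith, use L L1 in simp)
  have t5: "0 \<le> ((3475812257956/390625) + (-2005381690688/390625)*w) * (L^5*(1-L)^5)" by (rule mult_nonneg_nonneg) (use wl wu in linarith, use L L1 in simp)
  have t6: "0 \<le> ((4980356072632/390625) + (-574819455584/78125)*w) * (L^6*(1-L)^4)" by (rule mult_nonneg_nonneg) (use wl wu in linarith, use L L1 in simp)
  have t7: "0 \<le> ((4964570049024/390625) + (-573074505952/78125)*w) * (L^7*(1-L)^3)" by (rule mult_nonneg_nonneg) (use wl wu in linarith, use L L1 in simp)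
  have t8: "0 \<le> ((3292335354656/390625) + (-1900364325056/390625)*w) * (L^8*(1-L)^2)" by (rule mult_nonneg_nonneg) (use wl wu in linarith, use L L1 in simp)
  have t9: "0 \<le> ((1307166332944/390625) + (-754540287872/390625)*w) * (L^9*(1-L)^1)" by (rule mult_nonneg_nonneg) (use wl wu in linarith, use L L1 in simp)
  have t10: "0 \<le> ((234370852512/390625) + (-135290027776/390625)*w) * (L^10)" by (rule mult_nonneg_nonneg) (use wl wu in linarith, use L L1 in simp)
  have s: "0 \<le> ((8686184/3125) + (-24889258/15625)*w) * ((1-L)^10) + ((17735306049/390625) + (-10192598234/390625)*w) * (L^1*(1-L)^9) + ((131402163374/390625) + (-75651609764/390625)*w) * (L^2*(1-L)^8) + ((581844597396/390625) + (-335346318476/390625)*w) * (L^3*(1-L)^7) + ((1707394932304/390625) + (-984702079648/390625)*w) * (L^4*(1-L)^6) + ((3475812257956/390625) + (-2005381690688/390625)*w) * (L^5*(1-L)^5) + ((4980356072632/390625) + (-574819455584/78125)*w) * (L^6*(1-L)^4) + ((4964570049024/390625) + (-573074505952/78125)*w) * (L^7*(1-L)^3) + ((3292335354656/390625) + (-1900364325056/390625)*w) * (L^8*(1-L)^2) + ((1307166332944/390625) + (-754540287872/390625)*w) * (L^9*(1-L)^1) + ((234370852512/390625) + (-135290027776/390625)*w) * (L^10)" using t0 t1 t2 t3 t4 t5 t6 t7 t8 t9 t10 by linarith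
  have p: "0 \<le> L^3*(1-L)^5 * (((8686184/3125) + (-24889258/15625)*w) * ((1-L)^10) + ((17735306049/390625) + (-10192598234/390625)*w) * (L^1*(1-L)^9) + ((131402163374/390625) + (-75651609764/390625)*w) * (L^2*(1-L)^8) + ((581844597396/390625) + (-335346318476/390625)*w) * (L^3*(1-L)^7) + ((1707394932304/390625) + (-984702079648/390625)*w) * (L^4*(1-L)^6) + ((3475812257956/390625) + (-2005381690688/390625)*w) * (L^5*(1-L)^5) + ((4980356072632/390625) + (-574819455584/78125)*w) * (L^6*(1-L)^4) + ((4964570049024/390625) + (-573074505952/78125)*w) * (L^7*(1-L)^3) + ((3292335354656/390625) + (-1900364325056/390625)*w) * (L^8*(1-L)^2) + ((1307166332944/390625) + (-754540287872/390625)*w) * (L^9*(1-L)^1) + ((234370852512/390625) + (-135290027776/390625)*w) * (L^10))" by (rule mult_nonneg_nonneg[OF _ s]) (use L L1 in simp)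
  have eq: "pc (2*L^2) (1-L^2) (sR L * E2a L w) (sR L * E2b L w) (den2 L w) 0 (P0b L) (1-L^2) = - (L^3*(1-L)^5 * (((8686184/3125) + (-24889258/15625)*w) * ((1-L)^10) + ((17735306049/390625) + (-10192598234/390625)*w) * (L^1*(1-L)^9) + ((131402163374/390625) + (-75651609764/390625)*w) * (L^2*(1-L)^8) + ((581844597396/390625) + (-335346318476/390625)*w) * (L^3*(1-L)^7) + ((1707394932304/390625) + (-984702079648/390625)*w) * (L^4*(1-L)^6) + ((3475812257956/390625) + (-2005381690688/390625)*w) * (L^5*(1-L)^5) + ((4980356072632/390625) + (-574819455584/78125)*w) * (L^6*(1-L)^4) + ((4964570049024/390625) + (-573074505952/78125)*w) * (L^7*(1-L)^3) + ((3292335354656/390625) + (-1900364325056/390625)*w) * (L^8*(1-L)^2) + ((1307166332944/390625) + (-754540287872/390625)*w) * (L^9*(1-L)^1) + ((234370852512/390625) + (-135290027776/390625)*w) * (L^10))) + (w^2-3)*((-9103789/12500)*L^3 + (3173798/15625)*L^3*w + (-1586899/62500)*L^3*w^2 + (-7170479283/6250000)*L^4 + (287228719/781250)*L^4*w + (-287228719/6250000)*L^4*w^2 + (829894712/390625)*L^5 + (-247556244/390625)*L^5*w + (61889061/781250)*L^5*w^2 + (5821805873/1250000)*L^6 + (-1096547209/781250)*L^6*w + (1096547209/6250000)*L^6*w^2 + (-1375290021/1562500)*L^7 + (117430526/390625)*L^7*w + (-58715263/1562500)*L^7*w^2 + (-32414921751/6250000)*L^8 + (1144154179/781250)*L^8*w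 + (-1144154179/6250000)*L^8*w^2 + (-1140419143/390625)*L^9 + (69823556/78125)*L^9*w + (-17455889/156250)*L^9*w^2 + (-16563468271/6250000)*L^10 + (26977283/31250)*L^10*w + (-26977283/250000)*L^10*w^2 + (973770761/312500)*L^11 + (-3173798/3125)*L^11*w + (1586899/12500)*L^11*w^2 + (61462288631/6250000)*L^12 + (-90453243/31250)*L^12*w + (90453243/250000)*L^12*w^2 + (155040408/390625)*L^13 + (-6347596/78125)*L^13*w + (1586899/156250)*L^13*w^2 + (-46912214289/6250000)*L^14 + (1712264021/781250)*L^14*w + (-1712264021/6250000)*L^14*w^2 + (-2675385999/1562500)*L^15 + (199949274/390625)*L^15*w + (-99974637/1562500)*L^15*w^2 + (2661044663/1250000)*L^16 + (-490351791/781250)*L^16*w + (490351791/6250000)*L^16*w^2 + (235432983/390625)*L^17 + (-69823556/390625)*L^17*w + (17455889/781250)*L^17*w^2 + (-815457717/6250000)*L^18 + (30151081/781250)*L^18*w + (-30151081/6250000)*L^18*w^2)" unfolding pc_def elc_def tnf_def tdf_def den2_def E2a_def E2b_def PRa_def PRb_def PMb_def P0b_def sR_def sM_def by ((simp only: mult_zero_left mult_zero_right mult_1_left mult_1_right add_0_left add_0_right diff_zero power_one_right power_zero_numeral)?, algebra)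
  show ?thesis using eq p w2 by simp
qed

lemma chk_R_sig_E2:
  fixes L w :: real
  assumes L: "0 \<le> L" "L \<le> 1" and w2: "w^2 = 3" and wl: "(4330127/2500000) \<le> w" and wu: "w \<le> (17320509/10000000)"
  shows "pc (2*L^2) (1-L^2) (sR L * E2a L w) (sR L * E2b L w) (den2 L w) (PRa L) (PRb L w) (1-L^2) \<le> 0"
proof -
  have L1: "0 \<le> 1 - L" using L by simp
  have t0: "0 \<le> ((-13677792/625) + (7978712/625)*w) * ((1-L)^10)" by (rule mult_nonneg_nonneg) (use wl wu in linarith, use L L1 in simp)
  have t1: "0 \<le> ((-137899127001/390625) + (80095625188/390625)*w) * (L^1*(1-L)^9)" by (rule mult_nonneg_nonneg) (use wl wu in linarith, use L L1 in simp)
  have t2: "0 \<le> ((-995069307866/390625) + (576498895036/390625)*w) * (L^2*(1-L)^8)" by (rule mult_nonneg_nonneg) (use wl wu in linarith, use L L1 in simp)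
  have t3: "0 \<le> ((-4224805629548/390625) + (2444101885112/390625)*w) * (L^3*(1-L)^7)" by (rule mult_nonneg_nonneg) (use wl wu in linarith, use L L1 in simp)
  have t4: "0 \<le> ((-11678769220128/390625) + (6750781631464/390625)*w) * (L^4*(1-L)^6)" by (rule mult_nonneg_nonneg) (use wl wu in linarith, use L L1 in simp)
  have t5: "0 \<le> ((-21965947972228/390625) + (12691407411944/390625)*w) * (L^5*(1-L)^5)" by (rule mult_nonneg_nonneg) (use wl wu in linarith, use L L1 in simp)
  have t6: "0 \<le> ((-28514648004008/390625) + (16470958079696/390625)*w) * (L^6*(1-L)^4)" by (rule mult_nonneg_nonneg) (use wl wu in linarith, use L L1 in simp)
  have t7: "0 \<le> ((-25325021094896/390625) + (14626463908912/390625)*w) * (L^7*(1-L)^3)" by (rule mult_nonneg_nonneg) (use wl wu in linarith, use L L1 in simp)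
  have t8: "0 \<le> ((-14830110160128/390625) + (8564408546272/390625)*w) * (L^8*(1-L)^2)" by (rule mult_nonneg_nonneg) (use wl wu in linarith, use L L1 in simp)
  have t9: "0 \<le> ((-5224777366224/390625) + (603429114624/78125)*w) * (L^9*(1-L)^1)" by (rule mult_nonneg_nonneg) (use wl wu in linarith, use L L1 in simp)
  have t10: "0 \<le> ((-170392744608/78125) + (19678412288/15625)*w) * (L^10)" by (rule mult_nonneg_nonneg) (use wl wu in linarith, use L L1 in simp)
  have s: "0 \<le> ((-13677792/625) + (7978712/625)*w) * ((1-L)^10) + ((-137899127001/390625) + (80095625188/390625)*w) * (L^1*(1-L)^9) + ((-995069307866/390625) + (576498895036/390625)*w) * (L^2*(1-L)^8) + ((-4224805629548/390625) + (2444101885112/390625)*w) * (L^3*(1-L)^7) + ((-11678769220128/390625) + (6750781631464/390625)*w) * (L^4*(1-L)^6) + ((-21965947972228/390625) + (12691407411944/390625)*w) * (L^5*(1-L)^5) + ((-28514648004008/390625) + (16470958079696/390625)*w) * (L^6*(1-L)^4) + ((-25325021094896/390625) + (14626463908912/390625)*w) * (L^7*(1-L)^3) + ((-14830110160128/390625) + (8564408546272/390625)*w) * (L^8*(1-L)^2) + ((-5224777366224/390625) + (603429114624/78125)*w) * (L^9*(1-L)^1) + ((-170392744608/78125) + (19678412288/15625)*w) * (L^10)" using t0 t1 t2 t3 t4 t5 t6 t7 t8 t9 t10 by linarith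
  have p: "0 \<le> L^3*(1-L)^5 * (((-13677792/625) + (7978712/625)*w) * ((1-L)^10) + ((-137899127001/390625) + (80095625188/390625)*w) * (L^1*(1-L)^9) + ((-995069307866/390625) + (576498895036/390625)*w) * (L^2*(1-L)^8) + ((-4224805629548/390625) + (2444101885112/390625)*w) * (L^3*(1-L)^7) + ((-11678769220128/390625) + (6750781631464/390625)*w) * (L^4*(1-L)^6) + ((-21965947972228/390625) + (12691407411944/390625)*w) * (L^5*(1-L)^5) + ((-28514648004008/390625) + (16470958079696/390625)*w) * (L^6*(1-L)^4) + ((-25325021094896/390625) + (14626463908912/390625)*w) * (L^7*(1-L)^3) + ((-14830110160128/390625) + (8564408546272/390625)*w) * (L^8*(1-L)^2) + ((-5224777366224/390625) + (603429114624/78125)*w) * (L^9*(1-L)^1) + ((-170392744608/78125) + (19678412288/15625)*w) * (L^10))" by (rule mult_nonneg_nonneg[OF _ s]) (use L L1 in simp)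
  have eq: "pc (2*L^2) (1-L^2) (sR L * E2a L w) (sR L * E2b L w) (den2 L w) (PRa L) (PRb L w) (1-L^2) = - (L^3*(1-L)^5 * (((-13677792/625) + (7978712/625)*w) * ((1-L)^10) + ((-137899127001/390625) + (80095625188/390625)*w) * (L^1*(1-L)^9) + ((-995069307866/390625) + (576498895036/390625)*w) * (L^2*(1-L)^8) + ((-4224805629548/390625) + (2444101885112/390625)*w) * (L^3*(1-L)^7) + ((-11678769220128/390625) + (6750781631464/390625)*w) * (L^4*(1-L)^6) + ((-21965947972228/390625) + (12691407411944/390625)*w) * (L^5*(1-L)^5) + ((-28514648004008/390625) + (16470958079696/390625)*w) * (L^6*(1-L)^4) + ((-25325021094896/390625) + (14626463908912/390625)*w) * (L^7*(1-L)^3) + ((-14830110160128/390625) + (8564408546272/390625)*w) * (L^8*(1-L)^2) + ((-5224777366224/390625) + (603429114624/78125)*w) * (L^9*(1-L)^1) + ((-170392744608/78125) + (19678412288/15625)*w) * (L^10))) + (w^2-3)*((83521/2000)*L^2 + (-83521/2500)*L^2*w + (250563/5000)*L^2*w^2 + (-83521/2500)*L^2*w^3 + (83521/10000)*L^2*w^4 + (77610661/12500)*L^3 + (-131142709/62500)*L^3*w + (54942079/125000)*L^3*w^2 + (-6598159/62500)*L^3*w^3 + (83521/5000)*L^3*w^4 + (45641438517/6250000)*L^4 + (-3057668263/1562500)*L^4*w + (-465444037/6250000)*L^4*w^2 + (14950259/62500)*L^4*w^3 + (-250563/5000)*L^4*w^4 + (-11388941648/390625)*L^5 + (3345963681/312500)*L^5*w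 + (-379460179/125000)*L^5*w^2 + (50363163/62500)*L^5*w^3 + (-584647/5000)*L^5*w^4 + (-237609183839/6250000)*L^6 + (17045082147/1562500)*L^6*w + (-1684889941/6250000)*L^6*w^2 + (-42011063/62500)*L^6*w^3 + (584647/5000)*L^6*w^4 + (18056654457/312500)*L^7 + (-8006086369/312500)*L^7*w + (1165436139/125000)*L^7*w^2 + (-163617639/62500)*L^7*w^3 + (1753941/5000)*L^7*w^4 + (99221659517/1250000)*L^8 + (-34558097199/1562500)*L^8*w + (5600070623/6250000)*L^8*w^2 + (55040339/62500)*L^8*w^3 + (-584647/5000)*L^8*w^4 + (-28036396761/390625)*L^9 + (2388128669/62500)*L^9*w + (-82330031/5000)*L^9*w^2 + (58715263/12500)*L^9*w^3 + (-584647/1000)*L^9*w^4 + (-483784650977/6250000)*L^10 + (6557184869/312500)*L^10*w + (-1672145041/1250000)*L^10*w^2 + (-4426613/12500)*L^10*w^3 + (19833651487/312500)*L^11 + (-2394017911/62500)*L^11*w + (89794901/5000)*L^11*w^2 + (-62891313/12500)*L^11*w^3 + (584647/1000)*L^11*w^4 + (212456853167/6250000)*L^12 + (-601093701/62500)*L^12*w + (1978224941/1250000)*L^12*w^2 + (-5595907/12500)*L^12*w^3 + (584647/5000)*L^12*w^4 + (-15366424784/390625)*L^13 + (1581560303/62500)*L^13*w + (-1501355289/125000)*L^13*w^2 + (201202089/62500)*L^13*w^3 + (-1753941/5000)*L^13*w^4 + (-36798648261/6250000)*L^14 + (3943872313/1562500)*L^14*w + (-9231760223/6250000)*L^14*w^2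 + (41008811/62500)*L^14*w^3 + (-584647/5000)*L^14*w^4 + (4988920779/312500)*L^15 + (-3123263171/312500)*L^15*w + (566081929/125000)*L^15*w^2 + (-71243413/62500)*L^15*w^3 + (584647/5000)*L^15*w^4 + (7193981419/6250000)*L^16 + (-1608138477/1562500)*L^16*w + (5094511941/6250000)*L^16*w^2 + (-20629687/62500)*L^16*w^3 + (250563/5000)*L^16*w^4 + (-1232603367/390625)*L^17 + (560744099/312500)*L^17*w + (-92266429/125000)*L^17*w^2 + (10774209/62500)*L^17*w^3 + (-83521/5000)*L^17*w^4 + (-216818171/390625)*L^18 + (132142071/390625)*L^18*w + (-1156091613/6250000)*L^18*w^2 + (1920983/31250)*L^18*w^3 + (-83521/10000)*L^18*w^4)" unfolding pc_def elc_def tnf_def tdf_def den2_def E2a_def E2b_def PRa_def PRb_def PMb_def P0b_def sR_def sM_def by ((simp only: mult_zero_left mult_zero_right mult_1_left mult_1_right add_0_left add_0_right diff_zero power_one_right power_zero_numeral)?, algebra)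
  show ?thesis using eq p w2 by simp
qed

lemma chk_R_out_E2:
  fixes L w :: real
  assumes L: "0 \<le> L" "L \<le> 1" and w2: "w^2 = 3" and wl: "(4330127/2500000) \<le> w" and wu: "w \<le> (17320509/10000000)"
  shows "pc (2*L^2) (1-L^2) (E2a L w) (E2b L w) (den2 L w) (PRa L) (PRb L w) (1-L^2) \<le> 0"
proof -
  have L1: "0 \<le> 1 - L" using L by simp
  have t0: "0 \<le> ((-75473506/3125) + (219198408/15625)*w) * ((1-L)^10)" by (rule mult_nonneg_nonneg) (use wl wu in linarith, use L L1 in simp)
  have t1: "0 \<le> ((-152746042491/390625) + (88484305652/390625)*w) * (L^1*(1-L)^9)" by (rule mult_nonneg_nonneg) (use wl wu in linarith, use L L1 in simp)
  have t2: "0 \<le> ((-1111286742494/390625) + (642769945464/390625)*w) * (L^2*(1-L)^8)" by (rule mult_nonneg_nonneg) (use wl wu in linarith, use L L1 in simp)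
  have t3: "0 \<le> ((-4785908230544/390625) + (2765848816612/390625)*w) * (L^3*(1-L)^7)" by (rule mult_nonneg_nonneg) (use wl wu in linarith, use L L1 in simp)
  have t4: "0 \<le> ((-13529852670472/390625) + (7815599534296/390625)*w) * (L^4*(1-L)^6)" by (rule mult_nonneg_nonneg) (use wl wu in linarith, use L L1 in simp)
  have t5: "0 \<le> ((-26311937520596/390625) + (15195670781048/390625)*w) * (L^5*(1-L)^5)" by (rule mult_nonneg_nonneg) (use wl wu in linarith, use L L1 in simp)
  have t6: "0 \<le> ((-35820756769736/390625) + (20684642457264/390625)*w) * (L^6*(1-L)^4)" by (rule mult_nonneg_nonneg) (use wl wu in linarith, use L L1 in simp)
  have t7: "0 \<le> ((-33936105284176/390625) + (19595020783968/390625)*w) * (L^7*(1-L)^3)" by (rule mult_nonneg_nonneg) (use wl wu in linarith, use L L1 in simp)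
  have t8: "0 \<le> ((-21581116435968/390625) + (12460624425664/390625)*w) * (L^8*(1-L)^2)" by (rule mult_nonneg_nonneg) (use wl wu in linarith, use L L1 in simp)
  have t9: "0 \<le> ((-8379711018384/390625) + (4838188156032/390625)*w) * (L^9*(1-L)^1)" by (rule mult_nonneg_nonneg) (use wl wu in linarith, use L L1 in simp)
  have t10: "0 \<le> ((-1515332417952/390625) + (874888100096/390625)*w) * (L^10)" by (rule mult_nonneg_nonneg) (use wl wu in linarith, use L L1 in simp)
  have s: "0 \<le> ((-75473506/3125) + (219198408/15625)*w) * ((1-L)^10) + ((-152746042491/390625) + (88484305652/390625)*w) * (L^1*(1-L)^9) + ((-1111286742494/390625) + (642769945464/390625)*w) * (L^2*(1-L)^8) + ((-4785908230544/390625) + (2765848816612/390625)*w) * (L^3*(1-L)^7) + ((-13529852670472/390625) + (7815599534296/390625)*w) * (L^4*(1-L)^6) + ((-26311937520596/390625) + (15195670781048/390625)*w) * (L^5*(1-L)^5) + ((-35820756769736/390625) + (20684642457264/390625)*w) * (L^6*(1-L)^4) + ((-33936105284176/390625) + (19595020783968/390625)*w) * (L^7*(1-L)^3) + ((-21581116435968/390625) + (12460624425664/390625)*w) * (L^8*(1-L)^2) + ((-8379711018384/390625) + (4838188156032/390625)*w) * (L^9*(1-L)^1) + ((-1515332417952/390625) + (874888100096/390625)*w) * (L^10)" using t0 t1 t2 t3 t4 t5 t6 t7 t8 t9 t10 by linarith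
  have p: "0 \<le> L^3*(1-L)^5 * (((-75473506/3125) + (219198408/15625)*w) * ((1-L)^10) + ((-152746042491/390625) + (88484305652/390625)*w) * (L^1*(1-L)^9) + ((-1111286742494/390625) + (642769945464/390625)*w) * (L^2*(1-L)^8) + ((-4785908230544/390625) + (2765848816612/390625)*w) * (L^3*(1-L)^7) + ((-13529852670472/390625) + (7815599534296/390625)*w) * (L^4*(1-L)^6) + ((-26311937520596/390625) + (15195670781048/390625)*w) * (L^5*(1-L)^5) + ((-35820756769736/390625) + (20684642457264/390625)*w) * (L^6*(1-L)^4) + ((-33936105284176/390625) + (19595020783968/390625)*w) * (L^7*(1-L)^3) + ((-21581116435968/390625) + (12460624425664/390625)*w) * (L^8*(1-L)^2) + ((-8379711018384/390625) + (4838188156032/390625)*w) * (L^9*(1-L)^1) + ((-1515332417952/390625) + (874888100096/390625)*w) * (L^10))" by (rule mult_nonneg_nonneg[OF _ s]) (use L L1 in simp)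
  have eq: "pc (2*L^2) (1-L^2) (E2a L w) (E2b L w) (den2 L w) (PRa L) (PRb L w) (1-L^2) = - (L^3*(1-L)^5 * (((-75473506/3125) + (219198408/15625)*w) * ((1-L)^10) + ((-152746042491/390625) + (88484305652/390625)*w) * (L^1*(1-L)^9) + ((-1111286742494/390625) + (642769945464/390625)*w) * (L^2*(1-L)^8) + ((-4785908230544/390625) + (2765848816612/390625)*w) * (L^3*(1-L)^7) + ((-13529852670472/390625) + (7815599534296/390625)*w) * (L^4*(1-L)^6) + ((-26311937520596/390625) + (15195670781048/390625)*w) * (L^5*(1-L)^5) + ((-35820756769736/390625) + (20684642457264/390625)*w) * (L^6*(1-L)^4) + ((-33936105284176/390625) + (19595020783968/390625)*w) * (L^7*(1-L)^3) + ((-21581116435968/390625) + (12460624425664/390625)*w) * (L^8*(1-L)^2) + ((-8379711018384/390625) + (4838188156032/390625)*w) * (L^9*(1-L)^1) + ((-1515332417952/390625) + (874888100096/390625)*w) * (L^10))) + (w^2-3)*((-250563/2000)*L^2 + (167042/625)*L^2*w + (-584647/5000)*L^2*w^2 + (83521/10000)*L^2*w^4 + (84862249/12500)*L^3 + (-65259379/31250)*L^3*w + (31556199/125000)*L^3*w^2 + (-1920983/31250)*L^3*w^3 + (83521/5000)*L^3*w^4 + (57310605377/6250000)*L^4 + (-1417601644/390625)*L^4*w + (5038589863/6250000)*L^4*w^2 + (2589151/31250)*L^4*w^3 + (-250563/5000)*L^4*w^4 + (-2144107796/78125)*L^5 + (6833609323/781250)*L^5*w + (-5923832699/3125000)*L^5*w^2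 + (18291099/31250)*L^5*w^3 + (-584647/5000)*L^5*w^4 + (-250008034083/6250000)*L^6 + (5220258731/390625)*L^6*w + (-10761618137/6250000)*L^6*w^2 + (-13279839/31250)*L^6*w^3 + (584647/5000)*L^6*w^4 + (14315400333/312500)*L^7 + (-14495720667/781250)*L^7*w + (21316333371/3125000)*L^7*w^2 + (-69405951/31250)*L^7*w^3 + (1753941/5000)*L^7*w^4 + (409502450317/6250000)*L^8 + (-7340809814/390625)*L^8*w + (5498175003/6250000)*L^8*w^2 + (25306863/31250)*L^8*w^3 + (-584647/5000)*L^8*w^4 + (-862631817/15625)*L^9 + (4743648023/156250)*L^9*w + (-9067170099/625000)*L^9*w^2 + (5595907/1250)*L^9*w^3 + (-584647/1000)*L^9*w^4 + (-43934236857/1250000)*L^10 + (534089629/78125)*L^10*w + (1747872867/1250000)*L^10*w^2 + (-3591403/6250)*L^10*w^3 + (3956835631/62500)*L^11 + (-244950909/6250)*L^11*w + (94472077/5000)*L^11*w^2 + (-32823753/6250)*L^11*w^3 + (584647/1000)*L^11*w^4 + (-17117502793/1250000)*L^12 + (531431696/78125)*L^12*w + (-2026439967/1250000)*L^12*w^2 + (-250563/1250)*L^12*w^3 + (584647/5000)*L^12*w^4 + (-880949036/15625)*L^13 + (5252278197/156250)*L^13*w + (-9198577821/625000)*L^13*w^2 + (113003913/31250)*L^13*w^3 + (-1753941/5000)*L^13*w^4 + (108874725263/6250000)*L^14 + (-2043547611/390625)*L^14*w + (-944806603/6250000)*L^14*w^2 + (18291099/31250)*L^14*w^3 + (-584647/5000)*L^14*w^4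 + (9312008199/312500)*L^15 + (-12641812833/781250)*L^15*w + (19633030329/3125000)*L^15*w^2 + (-42512189/31250)*L^15*w^3 + (584647/5000)*L^15*w^4 + (-12383261217/6250000)*L^16 + (-95674606/390625)*L^16*w + (4983930137/6250000)*L^16*w^2 + (-10941251/31250)*L^16*w^3 + (250563/5000)*L^16*w^4 + (-521273667/78125)*L^17 + (2574641177/781250)*L^17*w + (-3530744501/3125000)*L^17*w^2 + (6765201/31250)*L^17*w^3 + (-83521/5000)*L^17*w^4 + (-453423627/390625)*L^18 + (245367069/390625)*L^18*w + (-1690626013/6250000)*L^18*w^2 + (2255067/31250)*L^18*w^3 + (-83521/10000)*L^18*w^4)" unfolding pc_def elc_def tnf_def tdf_def den2_def E2a_def E2b_def PRa_def PRb_def PMb_def P0b_def sR_def sM_def by ((simp only: mult_zero_left mult_zero_right mult_1_left mult_1_right add_0_left add_0_right diff_zero power_one_right power_zero_numeral)?, algebra)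
  show ?thesis using eq p w2 by simp
qed

lemma chk_R_ell_E2:
  fixes L w :: real
  assumes L: "0 \<le> L" "L \<le> 1" and w2: "w^2 = 3" and wl: "(4330127/2500000) \<le> w" and wu: "w \<le> (17320509/10000000)"
  shows "elc L (E2a L w) (E2b L w) (den2 L w) (PRa L) (PRb L w) (1-L^2) \<le> 0"
proof -
  have L1: "0 \<le> 1 - L" using L by simp
  have t0: "0 \<le> ((13872/25) + (-6936/25)*w) * ((1-L)^6)" by (rule mult_nonneg_nonneg) (use wl wu in linarith, use L L1 in simp)
  have t1: "0 \<le> ((621112/125) + (-1629756/625)*w) * (L^1*(1-L)^5)" by (rule mult_nonneg_nonneg) (use wl wu in linarith, use L L1 in simp)
  have t2: "0 \<le> ((11911696/625) + (-6470464/625)*w) * (L^2*(1-L)^4)" by (rule mult_nonneg_nonneg) (use wl wu in linarith, use L L1 in simp)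
  have t3: "0 \<le> ((24960192/625) + (-13854152/625)*w) * (L^3*(1-L)^3)" by (rule mult_nonneg_nonneg) (use wl wu in linarith, use L L1 in simp)
  have t4: "0 \<le> ((29561408/625) + (-16602288/625)*w) * (L^4*(1-L)^2)" by (rule mult_nonneg_nonneg) (use wl wu in linarith, use L L1 in simp)
  have t5: "0 \<le> ((18005472/625) + (-10165696/625)*w) * (L^5*(1-L)^1)" by (rule mult_nonneg_nonneg) (use wl wu in linarith, use L L1 in simp)
  have t6: "0 \<le> ((4042432/625) + (-2282624/625)*w) * (L^6)" by (rule mult_nonneg_nonneg) (use wl wu in linarith, use L L1 in simp)
  have s: "0 \<le> ((13872/25) + (-6936/25)*w) * ((1-L)^6) + ((621112/125) + (-1629756/625)*w) * (L^1*(1-L)^5) + ((11911696/625) + (-6470464/625)*w) * (L^2*(1-L)^4) + ((24960192/625) + (-13854152/625)*w) * (L^3*(1-L)^3) + ((29561408/625) + (-16602288/625)*w) * (L^4*(1-L)^2) + ((18005472/625) + (-10165696/625)*w) * (L^5*(1-L)^1) + ((4042432/625) + (-2282624/625)*w) * (L^6)" using t0 t1 t2 t3 t4 t5 t6 by linarith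
  have p: "0 \<le> L^2*(1-L)^3 * (((13872/25) + (-6936/25)*w) * ((1-L)^6) + ((621112/125) + (-1629756/625)*w) * (L^1*(1-L)^5) + ((11911696/625) + (-6470464/625)*w) * (L^2*(1-L)^4) + ((24960192/625) + (-13854152/625)*w) * (L^3*(1-L)^3) + ((29561408/625) + (-16602288/625)*w) * (L^4*(1-L)^2) + ((18005472/625) + (-10165696/625)*w) * (L^5*(1-L)^1) + ((4042432/625) + (-2282624/625)*w) * (L^6))" by (rule mult_nonneg_nonneg[OF _ s]) (use L L1 in simp)
  have eq: "elc L (E2a L w) (E2b L w) (den2 L w) (PRa L) (PRb L w) (1-L^2) = - (L^2*(1-L)^3 * (((13872/25) + (-6936/25)*w) * ((1-L)^6) + ((621112/125) + (-1629756/625)*w) * (L^1*(1-L)^5) + ((11911696/625) + (-6470464/625)*w) * (L^2*(1-L)^4) + ((24960192/625) + (-13854152/625)*w) * (L^3*(1-L)^3) + ((29561408/625) + (-16602288/625)*w) * (L^4*(1-L)^2) + ((18005472/625) + (-10165696/625)*w) * (L^5*(1-L)^1) + ((4042432/625) + (-2282624/625)*w) * (L^6))) + (w^2-3)*((-2312/25)*L^2 + (578/25)*L^2*w + (4624/625)*L^3 + (-578/25)*L^3*w + (4624/25)*L^4 + (-1156/25)*L^4*w + (48552/625)*L^5 + (1156/25)*L^5*w + (-6936/25)*L^7 + (-4624/25)*L^8 + (1156/25)*L^8*w + (182648/625)*L^9 + (-1156/25)*L^9*w + (2312/25)*L^10 + (-578/25)*L^10*w + (-62424/625)*L^11 + (578/25)*L^11*w)"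 unfolding pc_def elc_def tnf_def tdf_def den2_def E2a_def E2b_def PRa_def PRb_def PMb_def P0b_def sR_def sM_def by ((simp only: mult_zero_left mult_zero_right mult_1_left mult_1_right add_0_left add_0_right diff_zero power_one_right power_zero_numeral)?, algebra)
  show ?thesis using eq p w2 by simp
qed

lemma chk_M_in:
  fixes L w :: real
  assumes L: "0 \<le> L" "L \<le> 1" and w2: "w^2 = 3" and wl: "(4330127/2500000) \<le> w" and wu: "w \<le> (17320509/10000000)"
  shows "pc (2*L^2) (1-L^2) (sM L * E2a L w) (sM L * E2b L w) (den2 L w) 0 (P0b L) (1-L^2) \<le> 0"
proof -
  have L1: "0 \<le> 1 - L" using L by simp
  have t0: "0 \<le> ((52785272/15625) + (-30234602/15625)*w) * ((1-L)^10)" by (rule mult_nonneg_nonneg) (use wl wu in linarith, use L L1 in simp)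
  have t1: "0 \<le> ((21492847057/390625) + (-12348324374/390625)*w) * (L^1*(1-L)^9)" by (rule mult_nonneg_nonneg) (use wl wu in linarith, use L L1 in simp)
  have t2: "0 \<le> ((158846440318/390625) + (-91436066108/390625)*w) * (L^2*(1-L)^8)" by (rule mult_nonneg_nonneg) (use wl wu in linarith, use L L1 in simp)
  have t3: "0 \<le> ((702011290668/390625) + (-404565804364/390625)*w) * (L^3*(1-L)^7)" by (rule mult_nonneg_nonneg) (use wl wu in linarith, use L L1 in simp)
  have t4: "0 \<le> ((2057542031264/390625) + (-1186582109472/390625)*w) * (L^4*(1-L)^6)" by (rule mult_nonneg_nonneg) (use wl wu in linarith, use L L1 in simp)
  have t5: "0 \<le> ((4187210123892/390625) + (-2415764081296/390625)*w) * (L^5*(1-L)^5)" by (rule mult_nonneg_nonneg) (use wl wu in linarith, use L L1 in simp)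
  have t6: "0 \<le> ((6003050704152/390625) + (-3464239078848/390625)*w) * (L^6*(1-L)^4)" by (rule mult_nonneg_nonneg) (use wl wu in linarith, use L L1 in simp)
  have t7: "0 \<le> ((5991733141152/390625) + (-3458197462176/390625)*w) * (L^7*(1-L)^3)" by (rule mult_nonneg_nonneg) (use wl wu in linarith, use L L1 in simp)
  have t8: "0 \<le> ((3979794666336/390625) + (-2297170517568/390625)*w) * (L^8*(1-L)^2)" by (rule mult_nonneg_nonneg) (use wl wu in linarith, use L L1 in simp)
  have t9: "0 \<le> ((1581924764368/390625) + (-913142600064/390625)*w) * (L^9*(1-L)^1)" by (rule mult_nonneg_nonneg) (use wl wu in linarith, use L L1 in simp)
  have t10: "0 \<le> ((283549903904/390625) + (-163679464192/390625)*w) * (L^10)" by (rule mult_nonneg_nonneg) (use wl wu in linarith, use L L1 in simp)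
  have s: "0 \<le> ((52785272/15625) + (-30234602/15625)*w) * ((1-L)^10) + ((21492847057/390625) + (-12348324374/390625)*w) * (L^1*(1-L)^9) + ((158846440318/390625) + (-91436066108/390625)*w) * (L^2*(1-L)^8) + ((702011290668/390625) + (-404565804364/390625)*w) * (L^3*(1-L)^7) + ((2057542031264/390625) + (-1186582109472/390625)*w) * (L^4*(1-L)^6) + ((4187210123892/390625) + (-2415764081296/390625)*w) * (L^5*(1-L)^5) + ((6003050704152/390625) + (-3464239078848/390625)*w) * (L^6*(1-L)^4) + ((5991733141152/390625) + (-3458197462176/390625)*w) * (L^7*(1-L)^3) + ((3979794666336/390625) + (-2297170517568/390625)*w) * (L^8*(1-L)^2) + ((1581924764368/390625) + (-913142600064/390625)*w) * (L^9*(1-L)^1) + ((283549903904/390625) + (-163679464192/390625)*w) * (L^10)" using t0 t1 t2 t3 t4 t5 t6 t7 t8 t9 t10 by linarith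
  have p: "0 \<le> L^3*(1-L)^5 * (((52785272/15625) + (-30234602/15625)*w) * ((1-L)^10) + ((21492847057/390625) + (-12348324374/390625)*w) * (L^1*(1-L)^9) + ((158846440318/390625) + (-91436066108/390625)*w) * (L^2*(1-L)^8) + ((702011290668/390625) + (-404565804364/390625)*w) * (L^3*(1-L)^7) + ((2057542031264/390625) + (-1186582109472/390625)*w) * (L^4*(1-L)^6) + ((4187210123892/390625) + (-2415764081296/390625)*w) * (L^5*(1-L)^5) + ((6003050704152/390625) + (-3464239078848/390625)*w) * (L^6*(1-L)^4) + ((5991733141152/390625) + (-3458197462176/390625)*w) * (L^7*(1-L)^3) + ((3979794666336/390625) + (-2297170517568/390625)*w) * (L^8*(1-L)^2) + ((1581924764368/390625) + (-913142600064/390625)*w) * (L^9*(1-L)^1) + ((283549903904/390625) + (-163679464192/390625)*w) * (L^10))" by (rule mult_nonneg_nonneg[OF _ s]) (use L L1 in simp)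
  have eq: "pc (2*L^2) (1-L^2) (sM L * E2a L w) (sM L * E2b L w) (den2 L w) 0 (P0b L) (1-L^2) = - (L^3*(1-L)^5 * (((52785272/15625) + (-30234602/15625)*w) * ((1-L)^10) + ((21492847057/390625) + (-12348324374/390625)*w) * (L^1*(1-L)^9) + ((158846440318/390625) + (-91436066108/390625)*w) * (L^2*(1-L)^8) + ((702011290668/390625) + (-404565804364/390625)*w) * (L^3*(1-L)^7) + ((2057542031264/390625) + (-1186582109472/390625)*w) * (L^4*(1-L)^6) + ((4187210123892/390625) + (-2415764081296/390625)*w) * (L^5*(1-L)^5) + ((6003050704152/390625) + (-3464239078848/390625)*w) * (L^6*(1-L)^4) + ((5991733141152/390625) + (-3458197462176/390625)*w) * (L^7*(1-L)^3) + ((3979794666336/390625) + (-2297170517568/390625)*w) * (L^8*(1-L)^2) + ((1581924764368/390625) + (-913142600064/390625)*w) * (L^9*(1-L)^1) + ((283549903904/390625) + (-163679464192/390625)*w) * (L^10))) + (w^2-3)*((-55207381/62500)*L^3 + (3841966/15625)*L^3*w + (-1920983/62500)*L^3*w^2 + (-8461576379/6250000)*L^4 + (340013991/781250)*L^4*w + (-340013991/6250000)*L^4*w^2 + (201126082/78125)*L^5 + (-299673348/390625)*L^5*w + (74918337/781250)*L^5*w^2 + (33853491501/6250000)*L^6 + (-1273611729/781250)*L^6*w + (1273611729/6250000)*L^6*w^2 + (-339065493/312500)*L^7 + (142152742/390625)*L^7*w + (-71076371/1562500)*L^7*w^2 + (-35103706079/6250000)*L^8 + (1223666171/781250)*L^8*w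 + (-1223666171/6250000)*L^8*w^2 + (-271538909/78125)*L^9 + (84523252/78125)*L^9*w + (-21130813/156250)*L^9*w^2 + (-5433064459/1250000)*L^10 + (217071079/156250)*L^10*w + (-217071079/1250000)*L^10*w^2 + (232113529/62500)*L^11 + (-3841966/3125)*L^11*w + (1920983/12500)*L^11*w^2 + (16340398419/1250000)*L^12 + (-601267679/156250)*L^12*w + (601267679/1250000)*L^12*w^2 + (38773974/78125)*L^13 + (-7683932/78125)*L^13*w + (1920983/156250)*L^13*w^2 + (-61186250281/6250000)*L^14 + (2234103229/781250)*L^14*w + (-2234103229/6250000)*L^14*w^2 + (-646712351/312500)*L^15 + (242043858/390625)*L^15*w + (-121021929/1562500)*L^15*w^2 + (17556429499/6250000)*L^16 + (-647371271/781250)*L^16*w + (647371271/6250000)*L^16*w^2 + (56950629/78125)*L^17 + (-84523252/390625)*L^17*w + (21130813/781250)*L^17*w^2 + (-1195058061/6250000)*L^18 + (44182609/781250)*L^18*w + (-44182609/6250000)*L^18*w^2)" unfolding pc_def elc_def tnf_def tdf_def den2_def E2a_def E2b_def PRa_def PRb_def PMb_def P0b_def sR_def sM_def by ((simp only: mult_zero_left mult_zero_right mult_1_left mult_1_right add_0_left add_0_right diff_zero power_one_right power_zero_numeral)?, algebra)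
  show ?thesis using eq p w2 by simp
qed

lemma chk_M_sig:
  fixes L w :: real
  assumes L: "0 \<le> L" "L \<le> 1" and w2: "w^2 = 3" and wl: "(4330127/2500000) \<le> w" and wu: "w \<le> (17320509/10000000)"
  shows "pc (2*L^2) (1-L^2) (sM L * E2a L w) (sM L * E2b L w) (den2 L w) 0 (PMb L w) (1-L^2) \<le> 0"
proof -
  have L1: "0 \<le> 1 - L" using L by simp
  have t0: "0 \<le> ((22619452/3125) + (-12832756/3125)*w) * ((1-L)^10)" by (rule mult_nonneg_nonneg) (use wl wu in linarith, use L L1 in simp)
  have t1: "0 \<le> ((2246953036/15625) + (-1285426916/15625)*w) * (L^1*(1-L)^9)" by (rule mult_nonneg_nonneg) (use wl wu in linarith, use L L1 in simp)
  have t2: "0 \<le> ((19299836704/15625) + (-11088538864/15625)*w) * (L^2*(1-L)^8)" by (rule mult_nonneg_nonneg) (use wl wu in linarith, use L L1 in simp)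
  have t3: "0 \<le> ((92750617176/15625) + (-53405984176/15625)*w) * (L^3*(1-L)^7)" by (rule mult_nonneg_nonneg) (use wl wu in linarith, use L L1 in simp)
  have t4: "0 \<le> ((268564523536/15625) + (-154809104352/15625)*w) * (L^4*(1-L)^6)" by (rule mult_nonneg_nonneg) (use wl wu in linarith, use L L1 in simp)
  have t5: "0 \<le> ((458604427488/15625) + (-264481907824/15625)*w) * (L^5*(1-L)^5)" by (rule mult_nonneg_nonneg) (use wl wu in linarith, use L L1 in simp)
  have t6: "0 \<le> ((368403397216/15625) + (-212445922496/15625)*w) * (L^6*(1-L)^4)" by (rule mult_nonneg_nonneg) (use wl wu in linarith, use L L1 in simp)
  have t7: "0 \<le> ((-125785390304/15625) + (72779032128/15625)*w) * (L^7*(1-L)^3)" by (rule mult_nonneg_nonneg) (use wl wu in linarith, use L L1 in simp)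
  have t8: "0 \<le> ((-568747436288/15625) + (13137320384/625)*w) * (L^8*(1-L)^2)" by (rule mult_nonneg_nonneg) (use wl wu in linarith, use L L1 in simp)
  have t9: "0 \<le> ((-487865625728/15625) + (281685460864/15625)*w) * (L^9*(1-L)^1)" by (rule mult_nonneg_nonneg) (use wl wu in linarith, use L L1 in simp)
  have t10: "0 \<le> ((-148317648384/15625) + (85632632832/15625)*w) * (L^10)" by (rule mult_nonneg_nonneg) (use wl wu in linarith, use L L1 in simp)
  have s: "0 \<le> ((22619452/3125) + (-12832756/3125)*w) * ((1-L)^10) + ((2246953036/15625) + (-1285426916/15625)*w) * (L^1*(1-L)^9) + ((19299836704/15625) + (-11088538864/15625)*w) * (L^2*(1-L)^8) + ((92750617176/15625) + (-53405984176/15625)*w) * (L^3*(1-L)^7) + ((268564523536/15625) + (-154809104352/15625)*w) * (L^4*(1-L)^6) + ((458604427488/15625) + (-264481907824/15625)*w) * (L^5*(1-L)^5) + ((368403397216/15625) + (-212445922496/15625)*w) * (L^6*(1-L)^4) + ((-125785390304/15625) + (72779032128/15625)*w) * (L^7*(1-L)^3) + ((-568747436288/15625) + (13137320384/625)*w) * (L^8*(1-L)^2) + ((-487865625728/15625) + (281685460864/15625)*w) * (L^9*(1-L)^1) + ((-148317648384/15625) + (85632632832/15625)*w) * (L^10)" using t0 t1 t2 t3 t4 t5 t6 t7 t8 t9 t10 by linarith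
  have p: "0 \<le> L^3*(1-L)^5 * (((22619452/3125) + (-12832756/3125)*w) * ((1-L)^10) + ((2246953036/15625) + (-1285426916/15625)*w) * (L^1*(1-L)^9) + ((19299836704/15625) + (-11088538864/15625)*w) * (L^2*(1-L)^8) + ((92750617176/15625) + (-53405984176/15625)*w) * (L^3*(1-L)^7) + ((268564523536/15625) + (-154809104352/15625)*w) * (L^4*(1-L)^6) + ((458604427488/15625) + (-264481907824/15625)*w) * (L^5*(1-L)^5) + ((368403397216/15625) + (-212445922496/15625)*w) * (L^6*(1-L)^4) + ((-125785390304/15625) + (72779032128/15625)*w) * (L^7*(1-L)^3) + ((-568747436288/15625) + (13137320384/625)*w) * (L^8*(1-L)^2) + ((-487865625728/15625) + (281685460864/15625)*w) * (L^9*(1-L)^1) + ((-148317648384/15625) + (85632632832/15625)*w) * (L^10))" by (rule mult_nonneg_nonneg[OF _ s]) (use L L1 in simp)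
  have eq: "pc (2*L^2) (1-L^2) (sM L * E2a L w) (sM L * E2b L w) (den2 L w) 0 (PMb L w) (1-L^2) = - (L^3*(1-L)^5 * (((22619452/3125) + (-12832756/3125)*w) * ((1-L)^10) + ((2246953036/15625) + (-1285426916/15625)*w) * (L^1*(1-L)^9) + ((19299836704/15625) + (-11088538864/15625)*w) * (L^2*(1-L)^8) + ((92750617176/15625) + (-53405984176/15625)*w) * (L^3*(1-L)^7) + ((268564523536/15625) + (-154809104352/15625)*w) * (L^4*(1-L)^6) + ((458604427488/15625) + (-264481907824/15625)*w) * (L^5*(1-L)^5) + ((368403397216/15625) + (-212445922496/15625)*w) * (L^6*(1-L)^4) + ((-125785390304/15625) + (72779032128/15625)*w) * (L^7*(1-L)^3) + ((-568747436288/15625) + (13137320384/625)*w) * (L^8*(1-L)^2) + ((-487865625728/15625) + (281685460864/15625)*w) * (L^9*(1-L)^1) + ((-148317648384/15625) + (85632632832/15625)*w) * (L^10))) + (w^2-3)*((-83521/250)*L^2*w + (1085773/2500)*L^2*w^2 + (-250563/1250)*L^2*w^3 + (83521/2500)*L^2*w^4 + (-18281273/6250)*L^3 + (4215354/3125)*L^3*w + (574821/3125)*L^3*w^2 + (-1085773/3125)*L^3*w^3 + (83521/1250)*L^3*w^4 + (-860297223/62500)*L^4 + (167776638/15625)*L^4*w + (-358140649/62500)*L^4*w^2 + (5261823/3125)*L^4*w^3 + (-250563/1250)*L^4*w^4 + (166935189/31250)*L^5 + (31612843/15625)*L^5*w + (-97564666/15625)*L^5*w^2 + (9688436/3125)*L^5*w^3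 + (-584647/1250)*L^5*w^4 + (1404671713/12500)*L^6 + (-195295507/3125)*L^6*w + (314855963/12500)*L^6*w^2 + (-17205326/3125)*L^6*w^3 + (584647/1250)*L^6*w^4 + (418667311/6250)*L^7 + (-876793632/15625)*L^7*w + (543421439/15625)*L^7*w^2 + (-35329383/3125)*L^7*w^3 + (1753941/1250)*L^7*w^4 + (-20720752427/62500)*L^8 + (2528302628/15625)*L^8*w + (-3325933669/62500)*L^8*w^2 + (27812493/3125)*L^8*w^3 + (-584647/1250)*L^8*w^4 + (-10581070427/31250)*L^9 + (616518209/3125)*L^9*w + (-270846176/3125)*L^9*w^2 + (13864486/625)*L^9*w^3 + (-584647/250)*L^9*w^4 + (31342009377/62500)*L^10 + (-679154046/3125)*L^10*w + (730058217/12500)*L^10*w^2 + (-4259571/625)*L^10*w^3 + (786036217/1250)*L^11 + (-992818462/3125)*L^11*w + (73336351/625)*L^11*w^2 + (-15952511/625)*L^11*w^3 + (584647/250)*L^11*w^4 + (-24288868677/62500)*L^12 + (91258686/625)*L^12*w + (-362516687/12500)*L^12*w^2 + (83521/125)*L^12*w^3 + (584647/1250)*L^12*w^4 + (-18072972633/31250)*L^13 + (849572433/3125)*L^13*w + (-56237666/625)*L^13*w^2 + (54121608/3125)*L^13*w^3 + (-1753941/1250)*L^13*w^4 + (7161438047/62500)*L^14 + (-482790973/15625)*L^14*w + (-57944211/62500)*L^14*w^2 + (8519142/3125)*L^14*w^3 + (-584647/1250)*L^14*w^4 + (1688639789/6250)*L^15 + (-1887057868/15625)*L^15*w + (576742561/15625)*L^15*w^2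 + (-20128561/3125)*L^15*w^3 + (584647/1250)*L^15*w^4 + (230621707/12500)*L^16 + (-42212496/3125)*L^16*w + (85258757/12500)*L^16*w^2 + (-5762949/3125)*L^16*w^3 + (250563/1250)*L^16*w^4 + (-1608926689/31250)*L^17 + (344800987/15625)*L^17*w + (-98709684/15625)*L^17*w^2 + (3173798/3125)*L^17*w^3 + (-83521/1250)*L^17*w^4 + (-809996197/62500)*L^18 + (187549729/31250)*L^18*w + (-61703523/31250)*L^18*w^2 + (2422109/6250)*L^18*w^3 + (-83521/2500)*L^18*w^4)" unfolding pc_def elc_def tnf_def tdf_def den2_def E2a_def E2b_def PRa_def PRb_def PMb_def P0b_def sR_def sM_def by ((simp only: mult_zero_left mult_zero_right mult_1_left mult_1_right add_0_left add_0_right diff_zero power_one_right power_zero_numeral)?, algebra)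
  show ?thesis using eq p w2 by simp
qed

lemma chk_M_out:
  fixes L w :: real
  assumes L: "0 \<le> L" "L \<le> 1" and w2: "w^2 = 3" and wl: "(4330127/2500000) \<le> w" and wu: "w \<le> (17320509/10000000)"
  shows "pc (2*L^2) (1-L^2) (E2a L w) (E2b L w) (den2 L w) 0 (PMb L w) (1-L^2) \<le> 0"
proof -
  have L1: "0 \<le> 1 - L" using L by simp
  have t0: "0 \<le> ((-943296/125) + (550256/125)*w) * ((1-L)^10)" by (rule mult_nonneg_nonneg) (use wl wu in linarith, use L L1 in simp)
  have t1: "0 \<le> ((-1821657168/15625) + (1059342216/15625)*w) * (L^1*(1-L)^9)" by (rule mult_nonneg_nonneg) (use wl wu in linarith, use L L1 in simp)
  have t2: "0 \<le> ((-13207229552/15625) + (7661016272/15625)*w) * (L^2*(1-L)^8)" by (rule mult_nonneg_nonneg) (use wl wu in linarith, use L L1 in simp)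
  have t3: "0 \<le> ((-62626982672/15625) + (36255048336/15625)*w) * (L^3*(1-L)^7)" by (rule mult_nonneg_nonneg) (use wl wu in linarith, use L L1 in simp)
  have t4: "0 \<le> ((-224339652256/15625) + (129693521408/15625)*w) * (L^4*(1-L)^6)" by (rule mult_nonneg_nonneg) (use wl wu in linarith, use L L1 in simp)
  have t5: "0 \<le> ((-627981381568/15625) + (362772290944/15625)*w) * (L^5*(1-L)^5)" by (rule mult_nonneg_nonneg) (use wl wu in linarith, use L L1 in simp)
  have t6: "0 \<le> ((-1320770105728/15625) + (762727335232/15625)*w) * (L^6*(1-L)^4)" by (rule mult_nonneg_nonneg) (use wl wu in linarith, use L L1 in simp)
  have t7: "0 \<le> ((-1957247524288/15625) + (1130131291904/15625)*w) * (L^7*(1-L)^3)" by (rule mult_nonneg_nonneg) (use wl wu in linarith, use L L1 in simp)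
  have t8: "0 \<le> ((-1895167040384/15625) + (1094224321792/15625)*w) * (L^8*(1-L)^2)" by (rule mult_nonneg_nonneg) (use wl wu in linarith, use L L1 in simp)
  have t9: "0 \<le> ((-1067055547392/15625) + (616076901376/15625)*w) * (L^9*(1-L)^1)" by (rule mult_nonneg_nonneg) (use wl wu in linarith, use L L1 in simp)
  have t10: "0 \<le> ((-263917500416/15625) + (152373895168/15625)*w) * (L^10)" by (rule mult_nonneg_nonneg) (use wl wu in linarith, use L L1 in simp)
  have s: "0 \<le> ((-943296/125) + (550256/125)*w) * ((1-L)^10) + ((-1821657168/15625) + (1059342216/15625)*w) * (L^1*(1-L)^9) + ((-13207229552/15625) + (7661016272/15625)*w) * (L^2*(1-L)^8) + ((-62626982672/15625) + (36255048336/15625)*w) * (L^3*(1-L)^7) + ((-224339652256/15625) + (129693521408/15625)*w) * (L^4*(1-L)^6) + ((-627981381568/15625) + (362772290944/15625)*w) * (L^5*(1-L)^5) + ((-1320770105728/15625) + (762727335232/15625)*w) * (L^6*(1-L)^4) + ((-1957247524288/15625) + (1130131291904/15625)*w) * (L^7*(1-L)^3) + ((-1895167040384/15625) + (1094224321792/15625)*w) * (L^8*(1-L)^2) + ((-1067055547392/15625) + (616076901376/15625)*w) * (L^9*(1-L)^1) + ((-263917500416/15625) + (152373895168/15625)*w) * (L^10)" using t0 t1 t2 t3 t4 t5 t6 t7 t8 t9 t10 by linarith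
  have p: "0 \<le> L^3*(1-L)^5 * (((-943296/125) + (550256/125)*w) * ((1-L)^10) + ((-1821657168/15625) + (1059342216/15625)*w) * (L^1*(1-L)^9) + ((-13207229552/15625) + (7661016272/15625)*w) * (L^2*(1-L)^8) + ((-62626982672/15625) + (36255048336/15625)*w) * (L^3*(1-L)^7) + ((-224339652256/15625) + (129693521408/15625)*w) * (L^4*(1-L)^6) + ((-627981381568/15625) + (362772290944/15625)*w) * (L^5*(1-L)^5) + ((-1320770105728/15625) + (762727335232/15625)*w) * (L^6*(1-L)^4) + ((-1957247524288/15625) + (1130131291904/15625)*w) * (L^7*(1-L)^3) + ((-1895167040384/15625) + (1094224321792/15625)*w) * (L^8*(1-L)^2) + ((-1067055547392/15625) + (616076901376/15625)*w) * (L^9*(1-L)^1) + ((-263917500416/15625) + (152373895168/15625)*w) * (L^10))" by (rule mult_nonneg_nonneg[OF _ s]) (use L L1 in simp)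
  have eq: "pc (2*L^2) (1-L^2) (E2a L w) (E2b L w) (den2 L w) 0 (PMb L w) (1-L^2) = - (L^3*(1-L)^5 * (((-943296/125) + (550256/125)*w) * ((1-L)^10) + ((-1821657168/15625) + (1059342216/15625)*w) * (L^1*(1-L)^9) + ((-13207229552/15625) + (7661016272/15625)*w) * (L^2*(1-L)^8) + ((-62626982672/15625) + (36255048336/15625)*w) * (L^3*(1-L)^7) + ((-224339652256/15625) + (129693521408/15625)*w) * (L^4*(1-L)^6) + ((-627981381568/15625) + (362772290944/15625)*w) * (L^5*(1-L)^5) + ((-1320770105728/15625) + (762727335232/15625)*w) * (L^6*(1-L)^4) + ((-1957247524288/15625) + (1130131291904/15625)*w) * (L^7*(1-L)^3) + ((-1895167040384/15625) + (1094224321792/15625)*w) * (L^8*(1-L)^2) + ((-1067055547392/15625) + (616076901376/15625)*w) * (L^9*(1-L)^1) + ((-263917500416/15625) + (152373895168/15625)*w) * (L^10))) + (w^2-3)*((-83521/100)*L^2 + (83521/125)*L^2*w + (-83521/625)*L^2*w^3 + (83521/2500)*L^2*w^4 + (579734/625)*L^3 + (7177893/6250)*L^3*w + (-1606551/6250)*L^3*w^2 + (-1586899/6250)*L^3*w^3 + (83521/1250)*L^3*w^4 + (-6433429/15625)*L^4 + (103340331/31250)*L^4*w + (-103275017/31250)*L^4*w^2 + (8602663/6250)*L^4*w^3 + (-250563/1250)*L^4*w^4 + (17833306/3125)*L^5 + (-87809471/31250)*L^5*w + (-107515803/31250)*L^5*w^2 + (16453637/6250)*L^5*w^3 + (-584647/1250)*L^5*w^4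 + (1117621506/15625)*L^6 + (-1412060069/31250)*L^6*w + (646448783/31250)*L^6*w^2 + (-31487417/6250)*L^6*w^3 + (584647/1250)*L^6*w^4 + (86998366/3125)*L^7 + (-1118574211/31250)*L^7*w + (887979377/31250)*L^7*w^2 + (-65396943/6250)*L^7*w^3 + (1753941/1250)*L^7*w^4 + (-4757892709/15625)*L^8 + (4779262071/31250)*L^8*w + (-1613063037/31250)*L^8*w^2 + (55040339/6250)*L^8*w^3 + (-584647/1250)*L^8*w^4 + (-851227462/3125)*L^9 + (1077045489/6250)*L^9*w + (-509202683/6250)*L^9*w^2 + (1085773/50)*L^9*w^3 + (-584647/250)*L^9*w^4 + (3485395963/6250)*L^10 + (-1495993761/6250)*L^10*w + (396641807/6250)*L^10*w^2 + (-9103789/1250)*L^10*w^3 + (1927357402/3125)*L^11 + (-397829597/1250)*L^11*w + (29885779/250)*L^11*w^2 + (-32489669/1250)*L^11*w^3 + (584647/250)*L^11*w^4 + (-1533479883/3125)*L^12 + (1134576141/6250)*L^12*w + (-223311167/6250)*L^12*w^2 + (1419857/1250)*L^12*w^3 + (584647/1250)*L^12*w^4 + (-1981944674/3125)*L^13 + (1855012103/6250)*L^13*w + (-605891101/6250)*L^13*w^2 + (113505039/6250)*L^13*w^3 + (-1753941/1250)*L^13*w^4 + (2642244884/15625)*L^14 + (-1505342911/31250)*L^14*w + (53087277/31250)*L^14*w^2 + (16453637/6250)*L^14*w^3 + (-584647/1250)*L^14*w^4 + (999858394/3125)*L^15 + (-4385309409/31250)*L^15*w + (1297224763/31250)*L^15*w^2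 + (-43180357/6250)*L^15*w^3 + (584647/1250)*L^15*w^4 + (219849809/15625)*L^16 + (-402455331/31250)*L^16*w + (220204417/31250)*L^16*w^2 + (-11943503/6250)*L^16*w^3 + (250563/1250)*L^16*w^4 + (-201774002/3125)*L^17 + (841255591/31250)*L^17*w + (-229909037/31250)*L^17*w^2 + (6932243/6250)*L^17*w^3 + (-83521/1250)*L^17*w^4 + (-993721589/62500)*L^18 + (223463759/31250)*L^18*w + (-70055623/31250)*L^18*w^2 + (2589151/6250)*L^18*w^3 + (-83521/2500)*L^18*w^4)" unfolding pc_def elc_def tnf_def tdf_def den2_def E2a_def E2b_def PRa_def PRb_def PMb_def P0b_def sR_def sM_def by ((simp only: mult_zero_left mult_zero_right mult_1_left mult_1_right add_0_left add_0_right diff_zero power_one_right power_zero_numeral)?, algebra)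
  show ?thesis using eq p w2 by simp
qed

lemma chk_M_ell:
  fixes L w :: real
  assumes L: "0 \<le> L" "L \<le> 1" and w2: "w^2 = 3" and wl: "(4330127/2500000) \<le> w" and wu: "w \<le> (17320509/10000000)"
  shows "elc L (E2a L w) (E2b L w) (den2 L w) 0 (PMb L w) (1-L^2) \<le> 0"
proof -
  have L1: "0 \<le> 1 - L" using L by simp
  have t0: "0 \<le> ((13872/25) + (-6936/25)*w) * ((1-L)^6)" by (rule mult_nonneg_nonneg) (use wl wu in linarith, use L L1 in simp)
  have t1: "0 \<le> ((547944/125) + (-282336/125)*w) * (L^1*(1-L)^5)" by (rule mult_nonneg_nonneg) (use wl wu in linarith, use L L1 in simp)
  have t2: "0 \<le> ((1745968/125) + (-917888/125)*w) * (L^2*(1-L)^4)" by (rule mult_nonneg_nonneg) (use wl wu in linarith, use L L1 in simp)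
  have t3: "0 \<le> ((2791504/125) + (-1477056/125)*w) * (L^3*(1-L)^3)" by (rule mult_nonneg_nonneg) (use wl wu in linarith, use L L1 in simp)
  have t4: "0 \<le> ((2010496/125) + (-1035104/125)*w) * (L^4*(1-L)^2)" by (rule mult_nonneg_nonneg) (use wl wu in linarith, use L L1 in simp)
  have t5: "0 \<le> ((-18816/25) + (24896/25)*w) * (L^5*(1-L)^1)" by (rule mult_nonneg_nonneg) (use wl wu in linarith, use L L1 in simp)
  have t6: "0 \<le> ((-738432/125) + (443904/125)*w) * (L^6)" by (rule mult_nonneg_nonneg) (use wl wu in linarith, use L L1 in simp)
  have s: "0 \<le> ((13872/25) + (-6936/25)*w) * ((1-L)^6) + ((547944/125) + (-282336/125)*w) * (L^1*(1-L)^5) + ((1745968/125) + (-917888/125)*w) * (L^2*(1-L)^4) + ((2791504/125) + (-1477056/125)*w) * (L^3*(1-L)^3) + ((2010496/125) + (-1035104/125)*w) * (L^4*(1-L)^2) + ((-18816/25) + (24896/25)*w) * (L^5*(1-L)^1) + ((-738432/125) + (443904/125)*w) * (L^6)" using t0 t1 t2 t3 t4 t5 t6 by linarith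
  have p: "0 \<le> L^2*(1-L)^3 * (((13872/25) + (-6936/25)*w) * ((1-L)^6) + ((547944/125) + (-282336/125)*w) * (L^1*(1-L)^5) + ((1745968/125) + (-917888/125)*w) * (L^2*(1-L)^4) + ((2791504/125) + (-1477056/125)*w) * (L^3*(1-L)^3) + ((2010496/125) + (-1035104/125)*w) * (L^4*(1-L)^2) + ((-18816/25) + (24896/25)*w) * (L^5*(1-L)^1) + ((-738432/125) + (443904/125)*w) * (L^6))" by (rule mult_nonneg_nonneg[OF _ s]) (use L L1 in simp)
  have eq: "elc L (E2a L w) (E2b L w) (den2 L w) 0 (PMb L w) (1-L^2) = - (L^2*(1-L)^3 * (((13872/25) + (-6936/25)*w) * ((1-L)^6) + ((547944/125) + (-282336/125)*w) * (L^1*(1-L)^5) + ((1745968/125) + (-917888/125)*w) * (L^2*(1-L)^4) + ((2791504/125) + (-1477056/125)*w) * (L^3*(1-L)^3) + ((2010496/125) + (-1035104/125)*w) * (L^4*(1-L)^2) + ((-18816/25) + (24896/25)*w) * (L^5*(1-L)^1) + ((-738432/125) + (443904/125)*w) * (L^6))) + (w^2-3)*((-4624/25)*L^2 + (1156/25)*L^2*w + (24276/125)*L^3 + (-1156/25)*L^3*w + (9248/25)*L^4 + (-2312/25)*L^4*w + (-36992/125)*L^5 + (2312/25)*L^5*w + (-6936/25)*L^7 + (-9248/25)*L^8 + (2312/25)*L^8*w + (83232/125)*L^9 + (-2312/25)*L^9*w + (4624/25)*L^10 + (-1156/25)*L^10*w + (-35836/125)*L^11 + (1156/25)*L^11*w)"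 unfolding pc_def elc_def tnf_def tdf_def den2_def E2a_def E2b_def PRa_def PRb_def PMb_def P0b_def sR_def sM_def by ((simp only: mult_zero_left mult_zero_right mult_1_left mult_1_right add_0_left add_0_right diff_zero power_one_right power_zero_numeral)?, algebra)
  show ?thesis using eq p w2 by simp
qed

lemma chk_E2b:
  fixes L w :: real
  assumes L: "0 < L" "L < 1" and w2: "w^2 = 3" and wl: "(4330127/2500000) \<le> w" and wu: "w \<le> (17320509/10000000)"
  shows "0 < E2b L w"
proof -
  have L1: "0 < 1 - L" using L by simp
  have t0: "0 < ((-1734/25) + (1156/25)*w) * ((1-L)^2)" by (rule mult_pos_pos) (use wl wu in linarith, use L L1 in simp)
  have t1: "0 \<le> ((-7412/25) + (4624/25)*w) * (L^1*(1-L)^1)" by (rule mult_nonneg_nonneg) (use wl wu in linarith, use L L1 in simp)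
  have t2: "0 \<le> ((-7692/25) + (4624/25)*w) * (L^2)" by (rule mult_nonneg_nonneg) (use wl wu in linarith, use L L1 in simp)
  have s: "0 < ((-1734/25) + (1156/25)*w) * ((1-L)^2) + ((-7412/25) + (4624/25)*w) * (L^1*(1-L)^1) + ((-7692/25) + (4624/25)*w) * (L^2)" using t0 t1 t2 by linarith
  have p: "0 < L^1*(1-L)^2 * (((-1734/25) + (1156/25)*w) * ((1-L)^2) + ((-7412/25) + (4624/25)*w) * (L^1*(1-L)^1) + ((-7692/25) + (4624/25)*w) * (L^2))" by (rule mult_pos_pos[OF _ s]) (use L L1 in simp)
  have eq: "E2b L w = (L^1*(1-L)^2 * (((-1734/25) + (1156/25)*w) * ((1-L)^2) + ((-7412/25) + (4624/25)*w) * (L^1*(1-L)^1) + ((-7692/25) + (4624/25)*w) * (L^2))) - (w^2-3)*((289/25)*L + (-578/25)*L^3 + (289/25)*L^5)" unfolding pc_def elc_def tnf_def tdf_def den2_def E2a_def E2b_def PRa_def PRb_def PMb_def P0b_def sR_def sM_def by ((simp only: mult_zero_left mult_zero_right mult_1_left mult_1_right add_0_left add_0_right diff_zero power_one_right power_zero_numeral)?, algebra)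
  show ?thesis using eq p w2 by simp
qed

lemma pw_frac:
  fixes tn td Ua Ub du Pa Pb dp :: real
  assumes "td > 0" "du > 0" "dp > 0" "pc tn td Ua Ub du Pa Pb dp \<le> 0"
  shows "pw (tn/td) (Ua/du) (Ub/du) (Pa/dp) (Pb/dp) \<le> 0"
proof -
  have "pw (tn/td) (Ua/du) (Ub/du) (Pa/dp) (Pb/dp) = pc tn td Ua Ub du Pa Pb dp / (td*du^2*dp^2)"
    unfolding pw_def pc_def using assms by (simp add: field_simps power2_eq_square)
  moreover have "td*du^2*dp^2 > 0" using assms by simp
  ultimately show ?thesis using assms(4) by (simp add: divide_nonpos_pos)
qed

lemma nonpos_by_pos: "0 < (P::real) \<Longrightarrow> X * P \<le> 0 \<Longrightarrow> X \<le> 0"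
  by (meson mult_pos_pos not_le)
lemma zero_by_pos: "0 < (P::real) \<Longrightarrow> X * P = 0 \<Longrightarrow> X = 0"
  by simp

lemma ell_frac_gen:
  fixes L D Ua Ub du Pa Pb dp :: real
  assumes "D > 0" "du > 0" "dp > 0"
  shows "ell (8*L^2/D^2) (2*L^2/D) (Ua/du) (Ub/du) (Pa/dp) (Pb/dp) * (du*dp*D^2)
     = -2*(Ua*Pa + Ub*Pb)*D^2 + 2*Ub*(8*L^2*dp - 2*L^2*D*(dp+Pb))"
  unfolding ell_def using assms by (simp add: field_simps power2_eq_square)

lemma ell_frac:
  fixes L Ua Ub du Pa Pb dp :: real
  assumes "0 < L" "L < 1" "du > 0" "dp > 0" "elc L Ua Ub du Pa Pb dp \<le> 0"
  shows "ell (8*L^2/(1-L^2)^2) (2*L^2/(1-L^2)) (Ua/du) (Ub/du) (Pa/dp) (Pb/dp) \<le> 0"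
proof -
  have l: "1 - L^2 > 0" using assms by (simp add: power_less_one_iff)
  have pos: "du*dp*(1-L^2)^2 > 0" using assms l by simp
  have "ell (8*L^2/(1-L^2)^2) (2*L^2/(1-L^2)) (Ua/du) (Ub/du) (Pa/dp) (Pb/dp) * (du*dp*(1-L^2)^2) \<le> 0"
    unfolding ell_frac_gen[OF l assms(3,4)] using assms(5) unfolding elc_def .
  then show ?thesis using pos nonpos_by_pos by blast
qed

lemma gg_frac_gen:
  fixes L D Ua Ub du :: real
  assumes "D > 0" "du > 0"
  shows "gg (8*L^2/D^2) (Ua/du) (Ub/du) * (D^2*du^2) = D^2*(Ua^2+Ub^2) - 16*L^2*du*(du+Ub)"
  unfolding gg_def using assms by (simp add: field_simps power2_eq_square)

lemma gg_frac:
  fixes L Ua Ub du :: real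
  assumes "0 < L" "L < 1" "du > 0" "gcl L Ua Ub du = 0"
  shows "gg (8*L^2/(1-L^2)^2) (Ua/du) (Ub/du) = 0"
proof -
  have l: "1 - L^2 > 0" using assms by (simp add: power_less_one_iff)
  have pos: "(1-L^2)^2*du^2 > 0" using assms l by simp
  have "gg (8*L^2/(1-L^2)^2) (Ua/du) (Ub/du) * ((1-L^2)^2*du^2) = 0"
    unfolding gg_frac_gen[OF l assms(3)] using assms(4) unfolding gcl_def .
  then show ?thesis using pos zero_by_pos by blast
qed

lemma pw_neg: "pw t (-a) b pa pb = pw t a b (-pa) pb"
  unfolding pw_def by (simp add: power2_eq_square algebra_simps)
lemma pw_neg0: "pw t (-a) b 0 pb = pw t a b 0 pb"
  unfolding pw_def by (simp add: power2_eq_square algebra_simps)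
lemma ell_neg0: "ell s t (-a) b 0 pb = ell s t a b 0 pb"
  unfolding ell_def by simp
lemma gg_neg: "gg s (-a) b = gg s a b"
  unfolding gg_def by simp

lemma sqrt3_bounds: "(4330127/2500000::real) \<le> sqrt 3" "sqrt 3 \<le> (17320509/10000000::real)"
proof -
  show "(4330127/2500000::real) \<le> sqrt 3"
    by (rule real_le_rsqrt) (simp add: power2_eq_square)
  have "sqrt 3 \<le> sqrt ((17320509/10000000::real)^2)"
    by (rule real_sqrt_le_mono) (simp add: power2_eq_square)
  then show "sqrt 3 \<le> (17320509/10000000::real)" by simp
qed

lemma pierce_all:
  fixes L a b :: real
  assumes L: "0 < L" "L < 1"
  defines "w \<equiv> sqrt 3"
  defines "t \<equiv> 2*L^2/(1-L^2)" and "s \<equiv> 8*L^2/(1-L^2)^2"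
  assumes b: "b \<ge> 0" and g: "gg s a b \<le> 0"
  shows "pw t a b 0 (P0b L/(1-L^2)) \<le> 0 \<or> pw t a b (PRa L/(1-L^2)) (PRb L w/(1-L^2)) \<le> 0 \<or>
         pw t a b (-(PRa L/(1-L^2))) (PRb L w/(1-L^2)) \<le> 0 \<or> pw t a b 0 (PMb L w/(1-L^2)) \<le> 0"
proof -
  have w2: "w^2 = 3" unfolding w_def by simp
  note wb = sqrt3_bounds[folded w_def]
  have L0: "0 \<le> L" "L \<le> 1" using L by auto
  have dl: "1 - L^2 > 0" using L by (simp add: power_less_one_iff)
  have tdf: "tdf L > 0" unfolding tdf_def using L by simp
  have den: "den2 L w > 0"
  proof -
    have "(1-L)^4*(tdf L)^2 > 0" using L tdf by simp
    moreover have "(tnf L w)^2*(1+L)^4 \<ge> 0" by simp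
    ultimately show ?thesis unfolding den2_def by linarith
  qed
  have E2b: "E2b L w > 0" by (rule chk_E2b[OF L w2 wb])
  have E2a: "E2a L w > 0"
  proof -
    have alg: "(1+L)^4 - (1-L)^4 = 8*L + 8*L^3" by algebra
    have l3: "L^3 > 0" using L(1) by simp
    have p: "(1+L)^4 - (1-L)^4 > 0" using alg l3 L(1) by linarith
    have "2 - w > 0" using wb by simp
    then have "(2 - w)*(17/10)*(1-L) > 0" using L by (intro mult_pos_pos) auto
    moreover have "-(tnf L w) = (2 - w)*(17/10)*(1-L)" unfolding tnf_def by algebra
    ultimately have "-(tnf L w) > 0" by linarith
    then have "(-(tnf L w))*(tdf L)*((1+L)^4 - (1-L)^4) > 0" using p tdf by (intro mult_pos_pos)
    then show ?thesis unfolding E2a_def by simp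
  qed
  define e1a where "e1a = 4*L/(1-L^2)"
  define e2a where "e2a = E2a L w / den2 L w"
  define e2b where "e2b = E2b L w / den2 L w"
  have e1a: "e1a > 0" unfolding e1a_def using L dl by simp
  have e2a: "e2a > 0" unfolding e2a_def using E2a den by simp
  have e2b: "e2b > 0" unfolding e2b_def using E2b den by simp
  define p0b where "p0b = P0b L/(1-L^2)"
  define pra where "pra = PRa L/(1-L^2)"
  define prb where "prb = PRb L w/(1-L^2)"
  define pmb where "pmb = PMb L w/(1-L^2)"
  have t_eq: "t = (2*L^2)/(1-L^2)" unfolding t_def by simp
  have ge1: "gg s e1a 0 = 0"
  proof -
    have "gcl L (4*L) 0 (1-L^2) = 0" unfolding gcl_def by (simp add: power2_eq_square algebra_simps)
    from gg_frac[OF L dl this] show ?thesis unfolding s_def e1a_def by simp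
  qed
  have ge2: "gg s e2a e2b = 0"
    unfolding s_def e2a_def e2b_def by (rule gg_frac[OF L den gcl_E2])
  have sR: "0 < sR L" "sR L < 1" unfolding sR_def using L by (auto simp: field_simps)
  have sM: "0 < sM L" "sM L < 1" unfolding sM_def using L by (auto simp: field_simps)
  have d1: "(1::real) > 0" by simp
  note C = chk_p0_0 chk_R_in_E1 chk_R_sig_E1 chk_R_out_E1 chk_R_ell_E1 chk_R_in_E2 chk_R_sig_E2
    chk_R_out_E2 chk_R_ell_E2 chk_M_in chk_M_sig chk_M_out chk_M_ell
  note C' = C[OF L0 w2 wb]
  have c0: "pw t 0 0 0 p0b \<le> 0"
    using pw_frac[OF dl d1 dl C'(1)] unfolding t_def p0b_def by simp
  have cR1: "pw t (sR L * e1a) (sR L * 0) 0 p0b \<le> 0"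
    using pw_frac[OF dl dl dl C'(2)] unfolding t_def p0b_def e1a_def by simp
  have cR2: "pw t (sR L * e2a) (sR L * e2b) 0 p0b \<le> 0"
    using pw_frac[OF dl den dl C'(6)] unfolding t_def p0b_def e2a_def e2b_def by simp
  have cR3: "pw t (sR L * e1a) (sR L * 0) pra prb \<le> 0"
    using pw_frac[OF dl dl dl C'(3)] unfolding t_def pra_def prb_def e1a_def by simp
  have cR4: "pw t (sR L * e2a) (sR L * e2b) pra prb \<le> 0"
    using pw_frac[OF dl den dl C'(7)] unfolding t_def pra_def prb_def e2a_def e2b_def by simp
  have cR5: "pw t e1a 0 pra prb \<le> 0"
    using pw_frac[OF dl dl dl C'(4)] unfolding t_def pra_def prb_def e1a_def by simp
  have cR6: "pw t e2a e2b pra prb \<le> 0"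
    using pw_frac[OF dl den dl C'(8)] unfolding t_def pra_def prb_def e2a_def e2b_def by simp
  have cR7: "ell s t e1a 0 pra prb \<le> 0"
    using ell_frac[OF L dl dl C'(5)] unfolding t_def s_def pra_def prb_def e1a_def by simp
  have cR8: "ell s t e2a e2b pra prb \<le> 0"
    using ell_frac[OF L den dl C'(9)] unfolding t_def s_def pra_def prb_def e2a_def e2b_def by simp
  have cM1: "pw t (sM L * e2a) (sM L * e2b) 0 p0b \<le> 0"
    using pw_frac[OF dl den dl C'(10)] unfolding t_def p0b_def e2a_def e2b_def by simp
  have cM3: "pw t (sM L * e2a) (sM L * e2b) 0 pmb \<le> 0"
    using pw_frac[OF dl den dl C'(11)] unfolding t_def pmb_def e2a_def e2b_def by simp
  have cM5: "pw t e2a e2b 0 pmb \<le> 0"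
    using pw_frac[OF dl den dl C'(12)] unfolding t_def pmb_def e2a_def e2b_def by simp
  have cM7: "ell s t e2a e2b 0 pmb \<le> 0"
    using ell_frac[OF L den dl C'(13)] unfolding t_def s_def pmb_def e2a_def e2b_def by simp
  have right: "pw t a' b 0 p0b \<le> 0 \<or> pw t a' b pra prb \<le> 0"
    if ab: "a' * e2b \<ge> b * e2a" and g': "gg s a' b \<le> 0" for a'
  proof -
    define lam where "lam = (a' - b*e2a/e2b)/e1a"
    define mu where "mu = b/e2b"
    have lam: "lam \<ge> 0" unfolding lam_def using ab e1a e2b
      by (simp add: field_simps)
    have mu: "mu \<ge> 0" unfolding mu_def using b e2b by simp
    have ea: "a' = lam*e1a + mu*e2a" unfolding lam_def mu_def using e1a e2b by (simp add: field_simps)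
    have eb: "b = lam*0 + mu*e2b" unfolding mu_def using e2b by simp
    have "gg s (lam*e1a+mu*e2a) (lam*0+mu*e2b) \<le> 0" using g' ea eb by simp
    from pierce_cone[OF ge1 ge2 sR c0 cR1 cR2 cR3 cR4 cR5 cR6 cR7 cR8 lam mu this]
    show ?thesis using ea eb by simp
  qed
  have mid: "pw t a b 0 p0b \<le> 0 \<or> pw t a b 0 pmb \<le> 0"
    if ab: "\<bar>a\<bar> * e2b \<le> b * e2a"
  proof -
    define lam where "lam = (a/e2a + b/e2b)/2"
    define mu where "mu = (b/e2b - a/e2a)/2"
    have h: "\<bar>a\<bar>/e2a \<le> b/e2b" using ab e2a e2b by (simp add: field_simps)
    have h1: "a/e2a \<le> \<bar>a\<bar>/e2a" "(-a)/e2a \<le> \<bar>a\<bar>/e2a" using e2a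
      by (intro divide_right_mono; simp)+
    have lam: "lam \<ge> 0" unfolding lam_def using h h1 by simp
    have mu: "mu \<ge> 0" unfolding mu_def using h h1 by simp
    have ea: "a = lam*e2a + mu*(-e2a)" unfolding lam_def mu_def using e2a e2b by (simp add: field_simps)
    have eb: "b = lam*e2b + mu*e2b" unfolding lam_def mu_def using e2a e2b by (simp add: field_simps)
    have ge2': "gg s (-e2a) e2b = 0" using ge2 gg_neg by simp
    have cM2: "pw t (sM L * (-e2a)) (sM L * e2b) 0 p0b \<le> 0" using cM1 pw_neg0[of t "sM L * e2a"] by simp
    have cM4: "pw t (sM L * (-e2a)) (sM L * e2b) 0 pmb \<le> 0" using cM3 pw_neg0[of t "sM L * e2a"] by simp
    have cM6: "pw t (-e2a) e2b 0 pmb \<le> 0" using cM5 pw_neg0 by simp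
    have cM8: "ell s t (-e2a) e2b 0 pmb \<le> 0" using cM7 ell_neg0 by simp
    have "gg s (lam*e2a+mu*(-e2a)) (lam*e2b+mu*e2b) \<le> 0" using g ea eb by simp
    from pierce_cone[OF ge2 ge2' sM c0 cM1 cM2 cM3 cM4 cM5 cM6 cM7 cM8 lam mu this]
    show ?thesis using ea eb by simp
  qed
  have disj: "a * e2b \<ge> b * e2a \<or> \<bar>a\<bar> * e2b \<le> b * e2a \<or> (-a) * e2b \<ge> b * e2a"
  proof (cases "a \<ge> 0")
    case True then have "\<bar>a\<bar> = a" by simp
    then show ?thesis by linarith
  next
    case False then have "\<bar>a\<bar> = -a" by simp
    moreover have "(-a)*e2b = -(a*e2b)" by simp
    ultimately show ?thesis by linarith
  qed
  consider "a * e2b \<ge> b * e2a" | "\<bar>a\<bar> * e2b \<le> b * e2a" | "(-a) * e2b \<ge> b * e2a"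
    using disj by blast
  then show ?thesis
  proof cases
    case 1 then show ?thesis using right[OF 1 g] unfolding p0b_def pra_def prb_def by auto
  next
    case 2 then show ?thesis using mid[OF 2] unfolding p0b_def pmb_def by auto
  next
    case 3
    have "gg s (-a) b \<le> 0" using g gg_neg by simp
    from right[OF 3 this] show ?thesis using pw_neg[of t a b] pw_neg0[of t a b]
      unfolding p0b_def pra_def prb_def by auto
  qed
qed

lemma clique_right:
  fixes s a1 b1 a2 b2 :: real
  assumes s: "s > 0" and b: "b1 \<ge> 0" "b2 \<ge> 0" and g: "gg s a1 b1 \<le> 0" "gg s a2 b2 \<le> 0"
    and r: "b1 \<le> sqrt 3 * a1" "b2 \<le> sqrt 3 * a2"
  shows "(a1-a2)^2 + (b1-b2)^2 \<le> 2* s*(1+b1)*(1+b2)"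
proof -
  define w where "w = sqrt 3"
  define k where "k = sqrt (s/2)"
  have w: "w > 0" "w*w = 3" unfolding w_def by auto
  have k: "k > 0" "k*k = s/2" unfolding k_def using s by auto
  have e1: "(2*k)^2 + 0^2 \<le> 2* s*(1+0)" using k by (simp add: power2_eq_square)
  have wk: "w*k \<ge> 0" using w k by simp
  have kk: "k^2 + (w*k)^2 = 2* s" using k w by (simp add: power2_eq_square algebra_simps)
  have e2: "k^2 + (w*k)^2 \<le> 2* s*(1+w*k)"
    unfolding kk using s wk by (simp add: mult_left_mono)
  have B11: "(2*k)*(2*k) + (s+1)*0*0 \<ge> s" using k s by simp
  have B12: "(2*k)*k + (s+1)*0*(w*k) \<ge> s" using k s by simp
  have B22: "k*k + (s+1)*(w*k)*(w*k) \<ge> s"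
  proof -
    have "(s+1)*(w*k)*(w*k) = (s+1)*(w*w)*(k*k)" by (simp add: algebra_simps)
    also have "\<dots> = 3*(s+1)*(s/2)" by (simp only: w(2) k(2))
    finally have X: "(s+1)*(w*k)*(w*k) = 3*(s+1)*(s/2)" .
    have q2: "3*(s+1)*(s/2) = (3/2)*(s* s) + (3/2)* s" by algebra
    have "s* s \<ge> 0" "k*k \<ge> 0" by simp_all
    then show ?thesis using X q2 k s by linarith
  qed
  define l1 where "l1 = (a1 - b1/w)/(2*k)"
  define m1 where "m1 = b1/(w*k)"
  define l2 where "l2 = (a2 - b2/w)/(2*k)"
  define m2 where "m2 = b2/(w*k)"
  have lm: "l1 \<ge> 0" "m1 \<ge> 0" "l2 \<ge> 0" "m2 \<ge> 0"
    unfolding l1_def m1_def l2_def m2_def using r b w k unfolding w_def[symmetric]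
    by (auto simp: field_simps)
  have ea: "a1 = l1*(2*k) + m1*k" "a2 = l2*(2*k) + m2*k"
    unfolding l1_def m1_def l2_def m2_def using w k by (simp_all add: field_simps)
  have eb: "b1 = l1*0 + m1*(w*k)" "b2 = l2*0 + m2*(w*k)"
    unfolding m1_def m2_def using w k by simp_all
  have g1: "gg s (l1*(2*k)+m1*k) (l1*0+m1*(w*k)) \<le> 0" using g ea eb by simp
  have g2: "gg s (l2*(2*k)+m2*k) (l2*0+m2*(w*k)) \<le> 0" using g ea eb by simp
  from clique_cone[OF s order_refl wk e1 e2 B11 B12 B22 lm g1 g2]
  show ?thesis using ea eb by simp
qed

lemma clique_mid:
  fixes s a1 b1 a2 b2 :: real
  assumes s: "s > 0" and g: "gg s a1 b1 \<le> 0" "gg s a2 b2 \<le> 0"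
    and r: "sqrt 3 * \<bar>a1\<bar> \<le> b1" "sqrt 3 * \<bar>a2\<bar> \<le> b2"
  shows "(a1-a2)^2 + (b1-b2)^2 \<le> 2* s*(1+b1)*(1+b2)"
proof -
  define w where "w = sqrt 3"
  define k where "k = sqrt (s/2)"
  have w: "w > 0" "w*w = 3" unfolding w_def by auto
  have k: "k > 0" "k*k = s/2" unfolding k_def using s by auto
  have wk: "w*k \<ge> 0" using w k by simp
  have kk: "k^2 + (w*k)^2 = 2* s" using k w by (simp add: power2_eq_square algebra_simps)
  have e1: "k^2 + (w*k)^2 \<le> 2* s*(1+w*k)"
    unfolding kk using s wk by (simp add: mult_left_mono)
  have e2: "(-k)^2 + (w*k)^2 \<le> 2* s*(1+w*k)" using e1 by simp
  have q: "(s+1)*(w*k)*(w*k) = 3*(s+1)*(s/2)"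
  proof -
    have "(s+1)*(w*k)*(w*k) = (s+1)*(w*w)*(k*k)" by (simp add: algebra_simps)
    also have "\<dots> = 3*(s+1)*(s/2)" by (simp only: w(2) k(2))
    finally show ?thesis .
  qed
  have q2: "3*(s+1)*(s/2) = (3/2)*(s* s) + (3/2)* s" by algebra
  have ss: "s* s \<ge> 0" "k*k \<ge> 0" by simp_all
  have B11: "k*k + (s+1)*(w*k)*(w*k) \<ge> s" unfolding q using q2 ss k s by linarith
  have B12: "k*(-k) + (s+1)*(w*k)*(w*k) \<ge> s" unfolding q using q2 ss k s by linarith
  have B22: "(-k)*(-k) + (s+1)*(w*k)*(w*k) \<ge> s" unfolding q using q2 ss k s by linarith
  define l1 where "l1 = (a1/k + b1/(w*k))/2"
  define m1 where "m1 = (b1/(w*k) - a1/k)/2"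
  define l2 where "l2 = (a2/k + b2/(w*k))/2"
  define m2 where "m2 = (b2/(w*k) - a2/k)/2"
  have h: "\<bar>a1\<bar>/k \<le> b1/(w*k)" "\<bar>a2\<bar>/k \<le> b2/(w*k)"
    using r w k unfolding w_def[symmetric] by (simp_all add: field_simps)
  have h1: "a1/k \<le> \<bar>a1\<bar>/k" "(-a1)/k \<le> \<bar>a1\<bar>/k" "a2/k \<le> \<bar>a2\<bar>/k" "(-a2)/k \<le> \<bar>a2\<bar>/k"
    using k by (intro divide_right_mono; simp)+
  have lm: "l1 \<ge> 0" "m1 \<ge> 0" "l2 \<ge> 0" "m2 \<ge> 0"
    unfolding l1_def m1_def l2_def m2_def using h h1 by simp_all
  have ea: "a1 = l1*k + m1*(-k)" "a2 = l2*k + m2*(-k)"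
    unfolding l1_def m1_def l2_def m2_def using w k by (simp_all add: field_simps)
  have eb: "b1 = l1*(w*k) + m1*(w*k)" "b2 = l2*(w*k) + m2*(w*k)"
    unfolding l1_def m1_def l2_def m2_def using w k by (simp_all add: field_simps)
  have g1: "gg s (l1*k+m1*(-k)) (l1*(w*k)+m1*(w*k)) \<le> 0" using g ea eb by simp
  have g2: "gg s (l2*k+m2*(-k)) (l2*(w*k)+m2*(w*k)) \<le> 0" using g ea eb by simp
  from clique_cone[OF s wk wk e1 e2 B11 B12 B22 lm g1 g2]
  show ?thesis using ea eb by simp
qed

lemma clique_left:
  fixes s a1 b1 a2 b2 :: real
  assumes s: "s > 0" and b: "b1 \<ge> 0" "b2 \<ge> 0" and g: "gg s a1 b1 \<le> 0" "gg s a2 b2 \<le> 0"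
    and r: "b1 \<le> -(sqrt 3 * a1)" "b2 \<le> -(sqrt 3 * a2)"
  shows "(a1-a2)^2 + (b1-b2)^2 \<le> 2* s*(1+b1)*(1+b2)"
proof -
  have "((-a1)-(-a2))^2 + (b1-b2)^2 \<le> 2* s*(1+b1)*(1+b2)"
    by (rule clique_right[OF s b]) (use g r gg_neg in auto)
  then show ?thesis by (simp add: power2_eq_square algebra_simps)
qed

theorem lemma25:
  fixes V :: "'a set" and c :: "'a \<Rightarrow> complex" and r :: real
  assumes "r > 0" and "finite V" and "V \<noteq> {}"
    and "\<forall>v\<in>V. c v \<in> hyp_plane"
  shows "\<exists>v\<in>V.
     (\<exists>K1 K2 K3. hudg_clique V c r K1 \<and> hudg_clique V c r K2 \<and> hudg_clique V c r K3 \<and>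
        hudg_neighbors V c r v \<subseteq> K1 \<union> K2 \<union> K3) \<and>
     (\<exists>p1 p2 p3 p4. {p1, p2, p3, p4} \<subseteq> hyp_plane \<and>
        (\<forall>u\<in>hudg_neighbors V c r v. {p1, p2, p3, p4} \<inter> hdisk (c u) r \<noteq> {}))"
proof -
  have cv: "\<And>x. x \<in> V \<Longrightarrow> norm (c x) < 1" using assms(4) by (auto simp: hyp_plane_def)
  define f where "f = (\<lambda>x. Im (cay (c x)))"
  define v where "v = arg_min_on f V"
  have vV: "v \<in> V" unfolding v_def by (rule arg_min_if_finite(1)[OF assms(2,3)])
  have vmin: "\<And>x. x \<in> V \<Longrightarrow> f v \<le> f x"
    unfolding v_def using arg_min_least[OF assms(2,3)] by blast
  define X where "X = Re (cay (c v))"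
  define Y where "Y = Im (cay (c v))"
  have Y: "Y > 0" unfolding Y_def using cay_im_pos cv[OF vV] by blast
  define A where "A = (\<lambda>x. ca X Y (c x))"
  define B where "B = (\<lambda>x. cb X Y (c x))"
  have Av: "A v = 0" unfolding A_def ca_def X_def by simp
  have Bv: "B v = 0" unfolding B_def cb_def Y_def using Y Y_def by simp
  have Bnn: "\<And>x. x \<in> V \<Longrightarrow> B x \<ge> 0"
  proof -
    fix x assume "x \<in> V"
    then have "Y \<le> Im (cay (c x))" using vmin unfolding f_def Y_def by blast
    then show "B x \<ge> 0" unfolding B_def cb_def using Y by (simp add: field_simps)
  qed
  define t where "t = cosh r - 1"
  define s where "s = cosh (2*r) - 1"
  have t: "t > 0" unfolding t_def using cosh_real_nonneg_less_iff[of 0 r] assms(1) by simp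
  have st: "s = 2*t^2 + 4*t" unfolding s_def t_def cosh_double_cosh by (simp add: power2_eq_square algebra_simps)
  have spos: "s > 0" using st t by (simp add: add_pos_pos)
  define L where "L = sqrt (t/(t+2))"
  have L2: "L^2 = t/(t+2)" unfolding L_def using t by simp
  have L: "0 < L" "L < 1" unfolding L_def using t by (auto simp: real_sqrt_less_iff)
  have dl: "1 - L^2 = 2/(t+2)" unfolding L2 using t by (simp add: field_simps)
  have tL: "t = 2*L^2/(1-L^2)" unfolding dl L2 using t by (simp add: field_simps)
  have sL: "s = 8*L^2/(1-L^2)^2" unfolding st dl L2 using t by (simp add: field_simps power2_eq_square)
  have dist: "\<And>x y R. x \<in> V \<Longrightarrow> y \<in> V \<Longrightarrow> R \<ge> 0 \<Longrightarrow> hdist (c x) (c y) \<le> R \<longleftrightarrow>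
        (A x - A y)^2 + (B x - B y)^2 \<le> 2*(cosh R - 1)*(1 + B x)*(1 + B y)"
    unfolding A_def B_def using hdist_le_iff cv Y by blast
  define N where "N = hudg_neighbors V c r v"
  have NV: "N \<subseteq> V" unfolding N_def hudg_neighbors_def by auto
  have gN: "\<And>u. u \<in> N \<Longrightarrow> gg s (A u) (B u) \<le> 0"
  proof -
    fix u assume u: "u \<in> N"
    then have uV: "u \<in> V" and h: "hdist (c u) (c v) \<le> 2*r"
      unfolding N_def hudg_neighbors_def hudg_adj_def by auto
    have "(A u - A v)^2 + (B u - B v)^2 \<le> 2*(cosh (2*r) - 1)*(1 + B u)*(1 + B v)"
      using dist[OF uV vV, of "2*r"] h assms(1) by simp
    then show "gg s (A u) (B u) \<le> 0" unfolding gg_def s_def Av Bv by (simp add: algebra_simps)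
  qed
  have adjI: "\<And>x y. x \<in> V \<Longrightarrow> y \<in> V \<Longrightarrow> x \<noteq> y \<Longrightarrow>
      (A x - A y)^2 + (B x - B y)^2 \<le> 2 * s*(1 + B x)*(1 + B y) \<Longrightarrow> hudg_adj c r x y"
  proof -
    fix x y assume xy: "x \<in> V" "y \<in> V" "x \<noteq> y" and
      h: "(A x - A y)^2 + (B x - B y)^2 \<le> 2 * s*(1 + B x)*(1 + B y)"
    have "hdist (c x) (c y) \<le> 2*r" using dist[OF xy(1,2), of "2*r"] h assms(1) unfolding s_def by simp
    then show "hudg_adj c r x y" unfolding hudg_adj_def using xy by simp
  qed
  define w where "w = sqrt 3"
  define K1 where "K1 = {u \<in> N. B u \<le> w * A u}"
  define K2 where "K2 = {u \<in> N. w * \<bar>A u\<bar> \<le> B u}"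
  define K3 where "K3 = {u \<in> N. B u \<le> -(w * A u)}"
  have cl1: "hudg_clique V c r K1"
    unfolding hudg_clique_def
  proof (intro conjI ballI impI)
    show "K1 \<subseteq> V" using NV unfolding K1_def by auto
    fix x y assume "x \<in> K1" "y \<in> K1" "x \<noteq> y"
    then have xy: "x \<in> N" "y \<in> N" "B x \<le> w * A x" "B y \<le> w * A y" unfolding K1_def by auto
    show "hudg_adj c r x y"
      using adjI[OF _ _ \<open>x \<noteq> y\<close>] clique_right[OF spos Bnn Bnn gN gN] xy NV unfolding w_def by blast
  qed
  have cl2: "hudg_clique V c r K2"
    unfolding hudg_clique_def
  proof (intro conjI ballI impI)
    show "K2 \<subseteq> V" using NV unfolding K2_def by auto
    fix x y assume "x \<in> K2" "y \<in> K2" "x \<noteq> y"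
    then have xy: "x \<in> N" "y \<in> N" "w * \<bar>A x\<bar> \<le> B x" "w * \<bar>A y\<bar> \<le> B y" unfolding K2_def by auto
    show "hudg_adj c r x y"
      using adjI[OF _ _ \<open>x \<noteq> y\<close>] clique_mid[OF spos gN gN] xy NV unfolding w_def by blast
  qed
  have cl3: "hudg_clique V c r K3"
    unfolding hudg_clique_def
  proof (intro conjI ballI impI)
    show "K3 \<subseteq> V" using NV unfolding K3_def by auto
    fix x y assume "x \<in> K3" "y \<in> K3" "x \<noteq> y"
    then have xy: "x \<in> N" "y \<in> N" "B x \<le> -(w * A x)" "B y \<le> -(w * A y)" unfolding K3_def by auto
    show "hudg_adj c r x y"
      using adjI[OF _ _ \<open>x \<noteq> y\<close>] clique_left[OF spos Bnn Bnn gN gN] xy NV unfolding w_def by blast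
  qed
  have cover: "N \<subseteq> K1 \<union> K2 \<union> K3"
  proof
    fix u assume u: "u \<in> N"
    have "B u \<le> w * A u \<or> w * \<bar>A u\<bar> \<le> B u \<or> B u \<le> -(w * A u)"
    proof (cases "A u \<ge> 0")
      case True then have "\<bar>A u\<bar> = A u" by simp
      then show ?thesis by linarith
    next
      case False then have "w * \<bar>A u\<bar> = -(w * A u)" by simp
      then show ?thesis by linarith
    qed
    then show "u \<in> K1 \<union> K2 \<union> K3" using u unfolding K1_def K2_def K3_def by auto
  qed
  define p0b where "p0b = P0b L/(1-L^2)"
  define pra where "pra = PRa L/(1-L^2)"
  define prb where "prb = PRb L w/(1-L^2)"
  define pmb where "pmb = PMb L w/(1-L^2)"
  have dlp: "1 - L^2 > 0" using L by (simp add: power_less_one_iff)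
  have wpos: "w > 0" unfolding w_def by simp
  have pb: "1 + p0b > 0" "1 + prb > 0" "1 + pmb > 0"
  proof -
    have "P0b L \<ge> 0" unfolding P0b_def using L by simp
    then show "1 + p0b > 0" unfolding p0b_def using dlp by (simp add: add_pos_nonneg)
    have "PRb L w \<ge> 0" unfolding PRb_def using L wpos by simp
    then show "1 + prb > 0" unfolding prb_def using dlp by (simp add: add_pos_nonneg)
    have "PMb L w \<ge> 0" unfolding PMb_def using L wpos by simp
    then show "1 + pmb > 0" unfolding pmb_def using dlp by (simp add: add_pos_nonneg)
  qed
  define q1 where "q1 = icay (Complex (X + Y*0) (Y*(1+p0b)))"
  define q2 where "q2 = icay (Complex (X + Y*pra) (Y*(1+prb)))"
  define q3 where "q3 = icay (Complex (X + Y*(-pra)) (Y*(1+prb)))"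
  define q4 where "q4 = icay (Complex (X + Y*0) (Y*(1+pmb)))"
  note i1 = icay_coords[OF Y pb(1), of X 0, folded q1_def]
  note i2 = icay_coords[OF Y pb(2), of X pra, folded q2_def]
  note i3 = icay_coords[OF Y pb(2), of X "-pra", folded q3_def]
  note i4 = icay_coords[OF Y pb(3), of X 0, folded q4_def]
  have inH: "{q1, q2, q3, q4} \<subseteq> hyp_plane" using i1 i2 i3 i4 by (auto simp: hyp_plane_def)
  have pierce: "{q1, q2, q3, q4} \<inter> hdisk (c u) r \<noteq> {}" if u: "u \<in> N" for u
  proof -
    have uV: "u \<in> V" using u NV by auto
    have near: "\<And>q. norm q < 1 \<Longrightarrow> pw t (A u) (B u) (ca X Y q) (cb X Y q) \<le> 0 \<Longrightarrow> q \<in> hdisk (c u) r"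
    proof -
      fix q :: complex assume q: "norm q < 1" "pw t (A u) (B u) (ca X Y q) (cb X Y q) \<le> 0"
      have "hdist (c u) q \<le> r"
        using hdist_le_iff[OF cv[OF uV] q(1) Y, of r X] assms(1) q(2)
        unfolding pw_def t_def A_def B_def by simp
      then show "q \<in> hdisk (c u) r" unfolding hdisk_def hyp_plane_def using q(1) by simp
    qed
    have "pw t (A u) (B u) 0 p0b \<le> 0 \<or> pw t (A u) (B u) pra prb \<le> 0 \<or>
         pw t (A u) (B u) (-pra) prb \<le> 0 \<or> pw t (A u) (B u) 0 pmb \<le> 0"
      using pierce_all[OF L, of "B u" "A u"] Bnn[OF uV] gN[OF u]
      unfolding tL sL p0b_def pra_def prb_def pmb_def w_def by simp
    then show ?thesis
    proof (elim disjE)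
      assume "pw t (A u) (B u) 0 p0b \<le> 0"
      then have "q1 \<in> hdisk (c u) r" using near[of q1] i1 by simp
      then show ?thesis by blast
    next
      assume "pw t (A u) (B u) pra prb \<le> 0"
      then have "q2 \<in> hdisk (c u) r" using near[of q2] i2 by simp
      then show ?thesis by blast
    next
      assume "pw t (A u) (B u) (-pra) prb \<le> 0"
      then have "q3 \<in> hdisk (c u) r" using near[of q3] i3 by simp
      then show ?thesis by blast
    next
      assume "pw t (A u) (B u) 0 pmb \<le> 0"
      then have "q4 \<in> hdisk (c u) r" using near[of q4] i4 by simp
      then show ?thesis by blast
    qed
  qed
  show ?thesis
    apply (rule bexI[OF _ vV])
    using cl1 cl2 cl3 cover inH pierce unfolding N_def by blast
qed

end
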